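(* If a first-order theory $T$ is positively model-complete, then every homomorphism between models of $T$ is elementary.
   Context: A homomorphism of $\mathscr L$-structures preserves atomic sentences with parameters; it is elementary if it preserves (and reflects) all first-order sentences with parameters. A homomorphism $f:A\to B$ is an immersion if for every positive existential (coherent) sentence $\phi(\bar a)$ with parameters in $A$ — a prenex existential formula containing no negation — $B\models\phi(f\bar a)$ implies $A\models\phi(\bar a)$. $T$ is positively model-complete if every homomorphism between models of $T$ is an immersion. *)

theory Defs
  imports Main
begin

text \<open>A language is given by function symbols of type 'f and relation symbols
of type 'r together with arity functions fa and ra. Constants are 0-ary
function symbols. Variables are natural numbers.\<close>

datatype 'f trm = Var nat | Fn 'f "'f trm list"

datatype ('f, 'r) fm =
    Bot
  | Top
  | Eq "'f trm" "'f trm"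
  | Rel 'r "'f trm list"
  | Neg "('f, 'r) fm"
  | Conj "('f, 'r) fm" "('f, 'r) fm"
  | Disj "('f, 'r) fm" "('f, 'r) fm"
  | Imp "('f, 'r) fm" "('f, 'r) fm"
  | Ex nat "('f, 'r) fm"
  | All nat "('f, 'r) fm"

fun wft :: "('f \<Rightarrow> nat) \<Rightarrow> 'f trm \<Rightarrow> bool" where
  "wft fa (Var n) = True"
| "wft fa (Fn f ts) = (length ts = fa f \<and> (\<forall>t\<in>set ts. wft fa t))"

fun wff :: "('f \<Rightarrow> nat) \<Rightarrow> ('r \<Rightarrow> nat) \<Rightarrow> ('f, 'r) fm \<Rightarrow> bool" where
  "wff fa ra Bot = True"
| "wff fa ra Top = True"
| "wff fa ra (Eq t u) = (wft fa t \<and> wft fa u)"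
| "wff fa ra (Rel r ts) = (length ts = ra r \<and> (\<forall>t\<in>set ts. wft fa t))"
| "wff fa ra (Neg p) = wff fa ra p"
| "wff fa ra (Conj p q) = (wff fa ra p \<and> wff fa ra q)"
| "wff fa ra (Disj p q) = (wff fa ra p \<and> wff fa ra q)"
| "wff fa ra (Imp p q) = (wff fa ra p \<and> wff fa ra q)"
| "wff fa ra (Ex x p) = wff fa ra p"
| "wff fa ra (All x p) = wff fa ra p"

fun fvt :: "'f trm \<Rightarrow> nat set" where
  "fvt (Var n) = {n}"
| "fvt (Fn f ts) = (\<Union>t\<in>set ts. fvt t)"

fun fv :: "('f, 'r) fm \<Rightarrow> nat set" where
  "fv Bot = {}"
| "fv Top = {}"
| "fv (Eq t u) = fvt t \<union> fvt u"
| "fv (Rel r ts) = (\<Union>t\<in>set ts. fvt t)"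
| "fv (Neg p) = fv p"
| "fv (Conj p q) = fv p \<union> fv q"
| "fv (Disj p q) = fv p \<union> fv q"
| "fv (Imp p q) = fv p \<union> fv q"
| "fv (Ex x p) = fv p - {x}"
| "fv (All x p) = fv p - {x}"

definition sentence :: "('f \<Rightarrow> nat) \<Rightarrow> ('r \<Rightarrow> nat) \<Rightarrow> ('f, 'r) fm \<Rightarrow> bool" where
  "sentence fa ra p \<longleftrightarrow> wff fa ra p \<and> fv p = {}"

definition is_theory :: "('f \<Rightarrow> nat) \<Rightarrow> ('r \<Rightarrow> nat) \<Rightarrow> ('f, 'r) fm set \<Rightarrow> bool" where
  "is_theory fa ra T \<longleftrightarrow> (\<forall>p\<in>T. sentence fa ra p)"

fun atomic :: "('f, 'r) fm \<Rightarrow> bool" where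
  "atomic (Eq t u) = True"
| "atomic (Rel r ts) = True"
| "atomic _ = False"

fun pos_qf :: "('f, 'r) fm \<Rightarrow> bool" where
  "pos_qf Bot = True"
| "pos_qf Top = True"
| "pos_qf (Eq t u) = True"
| "pos_qf (Rel r ts) = True"
| "pos_qf (Conj p q) = (pos_qf p \<and> pos_qf q)"
| "pos_qf (Disj p q) = (pos_qf p \<and> pos_qf q)"
| "pos_qf _ = False"

definition coherent :: "('f, 'r) fm \<Rightarrow> bool" where
  "coherent p \<longleftrightarrow> (\<exists>xs q. p = foldr Ex xs q \<and> pos_qf q)"

record ('a, 'f, 'r) struc =
  dom :: "'a set"
  fint :: "'f \<Rightarrow> 'a list \<Rightarrow> 'a"
  rint :: "'r \<Rightarrow> 'a list \<Rightarrow> bool"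

definition is_struc :: "('f \<Rightarrow> nat) \<Rightarrow> ('a, 'f, 'r) struc \<Rightarrow> bool" where
  "is_struc fa M \<longleftrightarrow> dom M \<noteq> {} \<and>
     (\<forall>f xs. length xs = fa f \<and> set xs \<subseteq> dom M \<longrightarrow> fint M f xs \<in> dom M)"

fun eval :: "('a, 'f, 'r) struc \<Rightarrow> (nat \<Rightarrow> 'a) \<Rightarrow> 'f trm \<Rightarrow> 'a" where
  "eval M s (Var n) = s n"
| "eval M s (Fn f ts) = fint M f (map (eval M s) ts)"

fun sat :: "('a, 'f, 'r) struc \<Rightarrow> (nat \<Rightarrow> 'a) \<Rightarrow> ('f, 'r) fm \<Rightarrow> bool" where
  "sat M s Bot = False"
| "sat M s Top = True"
| "sat M s (Eq t u) = (eval M s t = eval M s u)"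
| "sat M s (Rel r ts) = rint M r (map (eval M s) ts)"
| "sat M s (Neg p) = (\<not> sat M s p)"
| "sat M s (Conj p q) = (sat M s p \<and> sat M s q)"
| "sat M s (Disj p q) = (sat M s p \<or> sat M s q)"
| "sat M s (Imp p q) = (sat M s p \<longrightarrow> sat M s q)"
| "sat M s (Ex x p) = (\<exists>a\<in>dom M. sat M (s(x := a)) p)"
| "sat M s (All x p) = (\<forall>a\<in>dom M. sat M (s(x := a)) p)"

definition is_model :: "('f \<Rightarrow> nat) \<Rightarrow> ('f, 'r) fm set \<Rightarrow> ('a, 'f, 'r) struc \<Rightarrow> bool" where
  "is_model fa T M \<longleftrightarrow> is_struc fa M \<and>
     (\<forall>p\<in>T. \<forall>s. range s \<subseteq> dom M \<longrightarrow> sat M s p)"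

text \<open>A formula with parameters from M is a well-formed formula together with an
assignment of its variables into dom M.\<close>

definition hom :: "('f \<Rightarrow> nat) \<Rightarrow> ('r \<Rightarrow> nat) \<Rightarrow> ('a, 'f, 'r) struc \<Rightarrow> ('b, 'f, 'r) struc
    \<Rightarrow> ('a \<Rightarrow> 'b) \<Rightarrow> bool" where
  "hom fa ra A B h \<longleftrightarrow> h ` dom A \<subseteq> dom B \<and>
     (\<forall>p s. wff fa ra p \<and> atomic p \<and> range s \<subseteq> dom A \<and> sat A s p \<longrightarrow> sat B (h \<circ> s) p)"

definition elementary :: "('f \<Rightarrow> nat) \<Rightarrow> ('r \<Rightarrow> nat) \<Rightarrow> ('a, 'f, 'r) struc \<Rightarrow> ('b, 'f, 'r) struc
    \<Rightarrow> ('a \<Rightarrow> 'b) \<Rightarrow> bool" where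
  "elementary fa ra A B h \<longleftrightarrow> hom fa ra A B h \<and>
     (\<forall>p s. wff fa ra p \<and> range s \<subseteq> dom A \<longrightarrow> (sat A s p \<longleftrightarrow> sat B (h \<circ> s) p))"

definition immersion :: "('f \<Rightarrow> nat) \<Rightarrow> ('r \<Rightarrow> nat) \<Rightarrow> ('a, 'f, 'r) struc \<Rightarrow> ('b, 'f, 'r) struc
    \<Rightarrow> ('a \<Rightarrow> 'b) \<Rightarrow> bool" where
  "immersion fa ra A B h \<longleftrightarrow> hom fa ra A B h \<and>
     (\<forall>p s. wff fa ra p \<and> coherent p \<and> range s \<subseteq> dom A \<and> sat B (h \<circ> s) p \<longrightarrow> sat A s p)"

text \<open>Positive model-completeness, relativised to carrier types 'a (source) and
'b (target): every homomorphism from a model of T with carrier in 'a to a model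
of T with carrier in 'b is an immersion. (HOL cannot quantify over all types.)\<close>

definition pos_model_complete :: "('f \<Rightarrow> nat) \<Rightarrow> ('r \<Rightarrow> nat) \<Rightarrow> ('f, 'r) fm set
    \<Rightarrow> 'a itself \<Rightarrow> 'b itself \<Rightarrow> bool" where
  "pos_model_complete fa ra T (_::'a itself) (_::'b itself) \<longleftrightarrow>
     (\<forall>(A::('a, 'f, 'r) struc) (B::('b, 'f, 'r) struc) h.
        is_model fa T A \<and> is_model fa T B \<and> hom fa ra A B h \<longrightarrow> immersion fa ra A B h)"

end

theory Submission
  imports Defs
begin


lemma finite_fvt: "finite (fvt t)"
  by (induction t) auto

lemma finite_fv: "finite (fv p)"
  by (induction p) (auto simp: finite_fvt)

lemma eval_cong: "(\<forall>n\<in>fvt t. s n = s' n) \<Longrightarrow> eval M s t = eval M s' t"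
proof (induction t)
  case (Var x) then show ?case by simp
next
  case (Fn f ts)
  have "map (eval M s) ts = map (eval M s') ts" by (rule map_cong) (use Fn in auto)
  then show ?case by (metis eval.simps(2))
qed

lemma sat_cong: "(\<forall>n\<in>fv p. s n = s' n) \<Longrightarrow> sat M s p = sat M s' p"
proof (induction p arbitrary: s s')
  case (Eq t u) then show ?case using eval_cong[of t s s' M] eval_cong[of u s s' M] by auto
next
  case (Rel r ts)
  have "map (eval M s) ts = map (eval M s') ts" by (rule map_cong[OF refl], rule eval_cong) (use Rel in auto)
  then show ?case by (metis sat.simps(4))
next
  case (Ex x p)
  have "\<And>a. sat M (s(x:=a)) p = sat M (s'(x:=a)) p" using Ex.IH Ex.prems by auto
  then show ?case by simp
next
  case (All x p)
  have "\<And>a. sat M (s(x:=a)) p = sat M (s'(x:=a)) p" using All.IH All.prems by auto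
  then show ?case by simp
next
  case (Neg p)
  have "sat M s p = sat M s' p" by (rule Neg.IH) (use Neg.prems in auto)
  then show ?case by simp
next
  case (Conj p q)
  have "sat M s p = sat M s' p" by (rule Conj.IH(1)) (use Conj.prems in auto)
  moreover have "sat M s q = sat M s' q" by (rule Conj.IH(2)) (use Conj.prems in auto)
  ultimately show ?case by simp
next
  case (Disj p q)
  have "sat M s p = sat M s' p" by (rule Disj.IH(1)) (use Disj.prems in auto)
  moreover have "sat M s q = sat M s' q" by (rule Disj.IH(2)) (use Disj.prems in auto)
  ultimately show ?case by simp
next
  case (Imp p q)
  have "sat M s p = sat M s' p" by (rule Imp.IH(1)) (use Imp.prems in auto)
  moreover have "sat M s q = sat M s' q" by (rule Imp.IH(2)) (use Imp.prems in auto)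
  ultimately show ?case by simp
qed auto

section \<open>Pairing into the carrier type\<close>

type_synonym ('f,'r) K = "nat + 'f + 'r"

lemma ex_pair: "\<exists>P :: ('f,'r) K \<times> ('f,'r) K \<Rightarrow> ('f,'r) K. inj P"
proof -
  have "\<not> finite (UNIV :: ('f,'r) K set)"
  proof
    assume "finite (UNIV :: ('f,'r) K set)"
    then have "finite (range (Inl :: nat \<Rightarrow> ('f,'r) K))" by (rule finite_subset[rotated]) auto
    then show False using finite_imageD[of "Inl :: nat \<Rightarrow> ('f,'r) K" UNIV] by auto
  qed
  from card_of_Times_same_infinite[OF this] obtain f where "bij_betw f ((UNIV :: ('f,'r) K set) \<times> (UNIV :: ('f,'r) K set)) (UNIV :: ('f,'r) K set)"
    using card_of_ordIso by blast
  then show ?thesis by (auto simp: bij_betw_def)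
qed

definition pr :: "('f,'r) K \<times> ('f,'r) K \<Rightarrow> ('f,'r) K" where
  "pr = (SOME P. inj P)"

lemma inj_pr: "inj pr"
  unfolding pr_def using ex_pair someI_ex by metis

lemma pr_eq[simp]: "pr (a, b) = pr (c, d) \<longleftrightarrow> a = c \<and> b = d"
  using inj_pr by (auto dest: injD)

definition P2 :: "('f,'r) K \<Rightarrow> ('f,'r) K \<Rightarrow> ('f,'r) K" where
  "P2 a b = pr (a, b)"

lemma P2_eq[simp]: "P2 a b = P2 c d \<longleftrightarrow> a = c \<and> b = d"
  by (simp add: P2_def)

definition elist :: "('f,'r) K list \<Rightarrow> ('f,'r) K" where
  "elist xs = P2 (Inl (length xs)) (foldr P2 xs (Inl 0))"

lemma foldr_P2_inj: "length xs = length ys \<Longrightarrow> foldr P2 xs z = foldr P2 ys z \<Longrightarrow> xs = ys"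
  by (induction xs ys rule: list_induct2) auto

lemma elist_eq[simp]: "elist xs = elist ys \<longleftrightarrow> xs = ys"
  unfolding elist_def using foldr_P2_inj by auto

lemma map_inj_aux:
  "(\<forall>t\<in>set ts. \<forall>t'. f t = f t' \<longrightarrow> t = t') \<Longrightarrow> map f ts = map f ts' \<Longrightarrow> ts = ts'"
proof (induction ts arbitrary: ts')
  case Nil then show ?case by simp
next
  case (Cons a ts) then show ?case by (cases ts') auto
qed

fun etrm :: "'f trm \<Rightarrow> ('f,'r) K" where
  "etrm (Var n) = P2 (Inl 0) (Inl n)"
| "etrm (Fn f ts) = P2 (Inl 1) (P2 (Inr (Inl f)) (elist (map etrm ts)))"

lemma etrm_inj: "etrm t = (etrm t' :: ('f,'r) K) \<Longrightarrow> t = t'"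
proof (induction t arbitrary: t')
  case (Var n) then show ?case by (cases t') auto
next
  case (Fn f ts)
  then show ?case
  proof (cases t')
    case (Fn g us)
    with Fn.prems have "f = g" "map (etrm :: 'f trm \<Rightarrow> ('f,'r) K) ts = map etrm us" by auto
    moreover have "\<forall>t\<in>set ts. \<forall>t'. (etrm t :: ('f,'r) K) = etrm t' \<longrightarrow> t = t'" using Fn.IH by blast
    ultimately show ?thesis using Fn map_inj_aux[of ts "etrm :: 'f trm \<Rightarrow> ('f,'r) K" us] by auto
  qed auto
qed

fun efm :: "('f,'r) fm \<Rightarrow> ('f,'r) K" where
  "efm Bot = P2 (Inl 0) (Inl 0)"
| "efm Top = P2 (Inl 1) (Inl 0)"
| "efm (Eq t u) = P2 (Inl 2) (P2 (etrm t) (etrm u))"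
| "efm (Rel r ts) = P2 (Inl 3) (P2 (Inr (Inr r)) (elist (map etrm ts)))"
| "efm (Neg p) = P2 (Inl 4) (efm p)"
| "efm (Conj p q) = P2 (Inl 5) (P2 (efm p) (efm q))"
| "efm (Disj p q) = P2 (Inl 6) (P2 (efm p) (efm q))"
| "efm (Imp p q) = P2 (Inl 7) (P2 (efm p) (efm q))"
| "efm (Ex x p) = P2 (Inl 8) (P2 (Inl x) (efm p))"
| "efm (All x p) = P2 (Inl 9) (P2 (Inl x) (efm p))"

lemma map_etrm_inj: "map (etrm :: 'f trm \<Rightarrow> ('f,'r) K) ts = map etrm us \<Longrightarrow> ts = us"
  using map_inj_aux[of ts "etrm :: 'f trm \<Rightarrow> ('f,'r) K" us] etrm_inj by blast

lemma efm_inj: "efm p = efm q \<Longrightarrow> p = q"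
proof (induction p arbitrary: q)
  case Bot then show ?case by (cases q) auto
next
  case Top then show ?case by (cases q) auto
next
  case (Eq t u) then show ?case by (cases q) (auto dest: etrm_inj)
next
  case (Rel r ts) then show ?case by (cases q) (auto dest: map_etrm_inj)
next
  case (Neg p) then show ?case by (cases q) auto
next
  case (Conj p1 p2) then show ?case by (cases q) auto
next
  case (Disj p1 p2) then show ?case by (cases q) auto
next
  case (Imp p1 p2) then show ?case by (cases q) auto
next
  case (Ex x p) then show ?case by (cases q) auto
next
  case (All x p) then show ?case by (cases q) auto
qed

datatype ('f,'r) skt = Pt "bool \<times> ('f,'r) K" | FA 'f "('f,'r) skt list"
  | SK "('f,'r) fm" nat "('f,'r) skt list"

fun eskt :: "('f,'r) skt \<Rightarrow> ('f,'r) K" where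
  "eskt (Pt (b, k)) = P2 (Inl 0) (P2 (Inl (if b then 1 else 0)) k)"
| "eskt (FA f ts) = P2 (Inl 1) (P2 (Inr (Inl f)) (elist (map eskt ts)))"
| "eskt (SK p x ts) = P2 (Inl 2) (P2 (efm p) (P2 (Inl x) (elist (map eskt ts))))"

lemma eskt_inj: "eskt t = eskt t' \<Longrightarrow> t = t'"
proof (induction t arbitrary: t')
  case (Pt bk) then show ?case by (cases bk; cases t') (auto split: if_splits)
next
  case (FA f ts)
  then show ?case
  proof (cases t')
    case (FA g us)
    with FA.prems have "f = g" "map eskt ts = map eskt us" by auto
    then show ?thesis using FA FA.IH map_inj_aux[of ts eskt us] by blast
  qed auto
next
  case (SK p x ts)
  then show ?case
  proof (cases t')
    case (SK q y us)
    with SK.prems have "p = q" "x = y" "map eskt ts = map eskt us" by (auto dest: efm_inj)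
    then show ?thesis using SK SK.IH map_inj_aux[of ts eskt us] by blast
  qed auto
qed

section \<open>Ultrafilters\<close>

definition ultra :: "'i set set \<Rightarrow> bool" where
  "ultra U \<longleftrightarrow> UNIV \<in> U \<and> {} \<notin> U \<and> (\<forall>A B. A \<in> U \<and> B \<in> U \<longrightarrow> A \<inter> B \<in> U)
     \<and> (\<forall>A B. A \<in> U \<and> A \<subseteq> B \<longrightarrow> B \<in> U) \<and> (\<forall>A. A \<in> U \<or> - A \<in> U)"

definition filt :: "'i set set \<Rightarrow> bool" where
  "filt U \<longleftrightarrow> UNIV \<in> U \<and> {} \<notin> U \<and> (\<forall>A B. A \<in> U \<and> B \<in> U \<longrightarrow> A \<inter> B \<in> U)
     \<and> (\<forall>A B. A \<in> U \<and> A \<subseteq> B \<longrightarrow> B \<in> U)"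

lemma filtD:
  assumes "filt U"
  shows "UNIV \<in> U" "{} \<notin> U" "A \<in> U \<Longrightarrow> B \<in> U \<Longrightarrow> A \<inter> B \<in> U"
    "A \<in> U \<Longrightarrow> A \<subseteq> B \<Longrightarrow> B \<in> U"
  using assms unfolding filt_def by blast+

lemma filtI:
  assumes "UNIV \<in> U" "{} \<notin> U" "\<And>A B. A \<in> U \<Longrightarrow> B \<in> U \<Longrightarrow> A \<inter> B \<in> U"
    "\<And>A B. A \<in> U \<Longrightarrow> A \<subseteq> B \<Longrightarrow> B \<in> U"
  shows "filt U"
  using assms unfolding filt_def by blast

lemma ultra_exists:
  assumes "filt F"
  shows "\<exists>U. ultra U \<and> F \<subseteq> U"
proof -
  let ?A = "{G. filt G \<and> F \<subseteq> G}"
  have "\<exists>M\<in>?A. \<forall>X\<in>?A. M \<subseteq> X \<longrightarrow> X = M"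
  proof (rule Zorn_Lemma2, intro ballI)
    fix C assume C: "C \<in> chains ?A"
    show "\<exists>U\<in>?A. \<forall>X\<in>C. X \<subseteq> U"
    proof (cases "C = {}")
      case True then show ?thesis using assms by auto
    next
      case False
      have sub: "\<And>X. X \<in> C \<Longrightarrow> filt X \<and> F \<subseteq> X" using C by (auto simp: chains_def)
      have ch: "\<And>X Y. X \<in> C \<Longrightarrow> Y \<in> C \<Longrightarrow> X \<subseteq> Y \<or> Y \<subseteq> X"
        using C unfolding chains_def chain_subset_def by blast
      obtain X0 where X0: "X0 \<in> C" using False by auto
      have "filt (\<Union>C)"
      proof (rule filtI)
        show "UNIV \<in> \<Union>C" using X0 sub filtD(1) by blast
        show "{} \<notin> \<Union>C" using sub filtD(2) by blast
      next
        fix A B assume "A \<in> \<Union>C" "B \<in> \<Union>C"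
        then obtain X Y where XY: "X \<in> C" "Y \<in> C" "A \<in> X" "B \<in> Y" by auto
        show "A \<inter> B \<in> \<Union>C"
        proof (cases "X \<subseteq> Y")
          case True
          then have "A \<inter> B \<in> Y" using XY sub filtD(3) by (metis subsetD)
          then show ?thesis using XY by auto
        next
          case False then have "Y \<subseteq> X" using ch XY by blast
          then have "A \<inter> B \<in> X" using XY sub filtD(3) by (metis subsetD)
          then show ?thesis using XY by auto
        qed
      next
        fix A B assume "A \<in> \<Union>C" "A \<subseteq> B"
        then obtain X where "X \<in> C" "A \<in> X" by auto
        then have "B \<in> X" using sub filtD(4) \<open>A \<subseteq> B\<close> by metis
        then show "B \<in> \<Union>C" using \<open>X \<in> C\<close> by auto
      qed
      moreover have "F \<subseteq> \<Union>C" using X0 sub by auto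
      ultimately show ?thesis by auto
    qed
  qed
  then obtain U where U: "filt U" "F \<subseteq> U" and max: "\<And>X. filt X \<Longrightarrow> F \<subseteq> X \<Longrightarrow> U \<subseteq> X \<Longrightarrow> X = U"
    by auto
  have compl: "A \<in> U \<or> - A \<in> U" for A
  proof (cases "\<exists>Z\<in>U. Z \<inter> A = {}")
    case True
    then obtain Z where "Z \<in> U" "Z \<subseteq> - A" by auto
    then show ?thesis using filtD(4)[OF U(1)] by metis
  next
    case False
    let ?G = "{Y. \<exists>Z\<in>U. Z \<inter> A \<subseteq> Y}"
    have "filt ?G"
    proof (rule filtI)
      show "UNIV \<in> ?G" using filtD(1)[OF U(1)] by auto
      show "{} \<notin> ?G" using False by auto
    next
      fix X Y assume "X \<in> ?G" "Y \<in> ?G"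
      then obtain Z1 Z2 where Z: "Z1 \<in> U" "Z2 \<in> U" "Z1 \<inter> A \<subseteq> X" "Z2 \<inter> A \<subseteq> Y" by auto
      then have "Z1 \<inter> Z2 \<in> U" using filtD(3)[OF U(1)] by metis
      moreover have "(Z1 \<inter> Z2) \<inter> A \<subseteq> X \<inter> Y" using Z by auto
      ultimately show "X \<inter> Y \<in> ?G" by blast
    next
      fix X Y assume "X \<in> ?G" "X \<subseteq> Y"
      then show "Y \<in> ?G" by blast
    qed
    moreover have "U \<subseteq> ?G" by blast
    ultimately have "?G = U" using max U by blast
    moreover have "A \<in> ?G" using filtD(1)[OF U(1)] by auto
    ultimately show ?thesis by auto
  qed
  have "ultra U" unfolding ultra_def using filtD[OF U(1)] compl by blast
  then show ?thesis using U by blast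
qed



definition d0 :: "('m,'f,'r) struc \<Rightarrow> 'm" where
  "d0 M = (SOME a. a \<in> dom M)"

lemma d0_dom: "is_struc fa M \<Longrightarrow> d0 M \<in> dom M"
  unfolding d0_def is_struc_def by (auto intro: someI_ex)

definition skf :: "('m,'f,'r) struc \<Rightarrow> ('f,'r) fm \<Rightarrow> nat \<Rightarrow> 'm list \<Rightarrow> 'm" where
  "skf M p x vs = (let \<sigma> = (\<lambda>n. if n < length vs then vs!n else d0 M) in
     if \<exists>a\<in>dom M. sat M (\<sigma>(x:=a)) p then SOME a. a\<in>dom M \<and> sat M (\<sigma>(x:=a)) p else d0 M)"

fun ev :: "('f \<Rightarrow> nat) \<Rightarrow> ('m,'f,'r) struc \<Rightarrow> (bool \<times> ('f,'r) K \<Rightarrow> 'm) \<Rightarrow> ('f,'r) skt \<Rightarrow> 'm" where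
  "ev fa M L (Pt b) = L b"
| "ev fa M L (FA f ts) = (if length ts = fa f then fint M f (map (ev fa M L) ts) else d0 M)"
| "ev fa M L (SK p x ts) = skf M p x (map (ev fa M L) ts)"

lemma ev_dom:
  assumes "is_struc fa M" "range L \<subseteq> dom M"
  shows "ev fa M L t \<in> dom M"
proof (induction t)
  case (Pt b) then show ?case using assms by auto
next
  case (FA f ts)
  then have "set (map (ev fa M L) ts) \<subseteq> dom M" by auto
  then show ?case using assms d0_dom[OF assms(1)] unfolding is_struc_def by auto
next
  case (SK p x ts)
  show ?case unfolding ev.simps skf_def Let_def using d0_dom[OF assms(1)]
    by (auto intro: someI2_ex)
qed

lemma ev_surj_list:
  assumes "set xs \<subseteq> range (ev fa M L)"
  shows "map (ev fa M L) (map (\<lambda>x. SOME t. ev fa M L t = x) xs) = xs"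
  using assms by (induction xs) (auto intro: someI_ex)

lemma H_closed:
  assumes "set xs \<subseteq> range (ev fa M L)" "length xs = fa f"
  shows "fint M f xs \<in> range (ev fa M L)"
proof -
  let ?ts = "map (\<lambda>x. SOME t. ev fa M L t = x) xs"
  have "ev fa M L (FA f ?ts) = fint M f xs"
    using ev_surj_list[OF assms(1)] assms(2) by simp
  then show ?thesis by (metis rangeI)
qed

lemma TV:
  assumes "is_struc fa M" "range L \<subseteq> dom M"
    and "range s \<subseteq> range (ev fa M L)" "a \<in> dom M" "sat M (s(x:=a)) q"
  shows "\<exists>b\<in>range (ev fa M L). sat M (s(x:=b)) q"
proof -
  obtain n0 where n0: "\<forall>n\<in>fv q. n < n0"
    using finite_fv[of q] finite_nat_set_iff_bounded by blast
  let ?xs = "map s [0..<n0]"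
  let ?ts = "map (\<lambda>x. SOME t. ev fa M L t = x) ?xs"
  have vs: "map (ev fa M L) ?ts = ?xs" using assms(3) by (intro ev_surj_list) auto
  define \<sigma> where "\<sigma> = (\<lambda>n. if n < length ?xs then ?xs!n else d0 M)"
  have agree: "\<And>c. sat M (\<sigma>(x:=c)) q = sat M (s(x:=c)) q"
    by (rule sat_cong) (use n0 in \<open>auto simp: \<sigma>_def\<close>)
  have ex: "\<exists>a\<in>dom M. sat M (\<sigma>(x:=a)) q" using assms(4,5) agree by auto
  let ?b = "ev fa M L (SK q x ?ts)"
  have "?b = (SOME a. a\<in>dom M \<and> sat M (\<sigma>(x:=a)) q)"
    using ex unfolding ev.simps vs skf_def Let_def \<sigma>_def by simp
  then have "sat M (\<sigma>(x:=?b)) q" using ex by (auto intro: someI2_ex)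
  then have "sat M (s(x:=?b)) q" using agree by simp
  moreover have "?b \<in> range (ev fa M L)" by (rule rangeI)
  ultimately show ?thesis by (rule bexI)
qed

definition encH :: "('f \<Rightarrow> nat) \<Rightarrow> ('m,'f,'r) struc \<Rightarrow> (bool \<times> ('f,'r) K \<Rightarrow> 'm) \<Rightarrow> 'm \<Rightarrow> ('f,'r) K" where
  "encH fa M L x = eskt (SOME t. ev fa M L t = x)"

lemma encH_inj: "inj_on (encH fa M L) (range (ev fa M L))"
proof (rule inj_onI)
  fix x y assume "x \<in> range (ev fa M L)" "y \<in> range (ev fa M L)" "encH fa M L x = encH fa M L y"
  then have "(SOME t. ev fa M L t = x) = (SOME t. ev fa M L t = y)"
    unfolding encH_def using eskt_inj by blast
  moreover have "ev fa M L (SOME t. ev fa M L t = x) = x" "ev fa M L (SOME t. ev fa M L t = y) = y"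
    using \<open>x \<in> _\<close> \<open>y \<in> _\<close> by (auto intro: someI_ex)
  ultimately show "x = y" by metis
qed

lemma LS:
  fixes M :: "('m,'f,'r) struc" and L :: "bool \<times> ('f,'r) K \<Rightarrow> 'm"
  assumes M: "is_struc fa M" and L: "range L \<subseteq> dom M"
  shows "\<exists>(M' :: (('f,'r) K,'f,'r) struc) j. is_struc fa M' \<and> j ` dom M' \<subseteq> dom M \<and>
     inj_on j (dom M') \<and> range L \<subseteq> j ` dom M' \<and>
     (\<forall>p s. wff fa ra p \<and> range s \<subseteq> dom M' \<longrightarrow> (sat M' s p \<longleftrightarrow> sat M (j \<circ> s) p))"
proof -
  define H where "H = range (ev fa M L)"
  define e where "e = encH fa M L"
  define j where "j = inv_into H e"
  have einj: "inj_on e H" unfolding e_def H_def by (rule encH_inj)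
  have je[simp]: "\<And>x. x \<in> H \<Longrightarrow> j (e x) = x" unfolding j_def using einj by simp
  have ej: "\<And>z. z \<in> e ` H \<Longrightarrow> e (j z) = z" unfolding j_def by (simp add: f_inv_into_f)
  have jH: "\<And>z. z \<in> e ` H \<Longrightarrow> j z \<in> H" unfolding j_def by (auto intro: inv_into_into)
  have HM: "H \<subseteq> dom M" unfolding H_def using ev_dom[OF M L] by auto
  define M' :: "(('f,'r) K,'f,'r) struc" where
    "M' = \<lparr>dom = e ` H, fint = (\<lambda>f xs. e (fint M f (map j xs))), rint = (\<lambda>r xs. rint M r (map j xs))\<rparr>"
  have dM'[simp]: "dom M' = e ` H" by (simp add: M'_def)
  have fM': "fint M' f xs = e (fint M f (map j xs))" for f xs by (simp add: M'_def)
  have rM': "rint M' r xs = rint M r (map j xs)" for r xs by (simp add: M'_def)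
  have clos: "\<And>f xs. set xs \<subseteq> H \<Longrightarrow> length xs = fa f \<Longrightarrow> fint M f xs \<in> H"
    unfolding H_def by (rule H_closed)
  have evl: "wft fa t \<Longrightarrow> range s \<subseteq> dom M' \<Longrightarrow> eval M' s t \<in> dom M' \<and> j (eval M' s t) = eval M (j \<circ> s) t" for t s
  proof (induction t)
    case (Var n) then show ?case by auto
  next
    case (Fn f ts)
    have ih: "\<And>t. t \<in> set ts \<Longrightarrow> eval M' s t \<in> dom M' \<and> j (eval M' s t) = eval M (j \<circ> s) t"
      using Fn by (auto simp: comp_def)
    have m: "map j (map (eval M' s) ts) = map (eval M (j \<circ> s)) ts" using ih by (auto simp: comp_def)
    have sH: "set (map (eval M (j \<circ> s)) ts) \<subseteq> H" using ih jH by fastforce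
    have inH: "fint M f (map (eval M (j \<circ> s)) ts) \<in> H"
      using clos[OF sH] Fn.prems by simp
    have "eval M' s (Fn f ts) = e (fint M f (map (eval M (j \<circ> s)) ts))"
      by (simp only: eval.simps fM' m)
    then show ?case using inH by (simp add: comp_def)
  qed
  have satl: "wff fa ra p \<Longrightarrow> range s \<subseteq> dom M' \<Longrightarrow> sat M' s p \<longleftrightarrow> sat M (j \<circ> s) p" for p s
  proof (induction p arbitrary: s)
    case (Eq t u)
    have jinj: "inj_on j (e ` H)" unfolding j_def by (rule inj_on_inv_into) simp
    have a: "eval M' s t \<in> dom M'" "j (eval M' s t) = eval M (j \<circ> s) t" using evl[of t s] Eq by auto
    have b: "eval M' s u \<in> dom M'" "j (eval M' s u) = eval M (j \<circ> s) u" using evl[of u s] Eq by auto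
    have "eval M' s t = eval M' s u \<longleftrightarrow> j (eval M' s t) = j (eval M' s u)"
      using jinj a(1) b(1) by (auto dest: inj_onD)
    then show ?case using a(2) b(2) by (simp only: sat.simps)
  next
    case (Rel r ts)
    have "map j (map (eval M' s) ts) = map (eval M (j \<circ> s)) ts" using evl Rel by auto
    then show ?case by (simp only: sat.simps rM')
  next
    case (Ex x p)
    have rs: "range (j \<circ> s) \<subseteq> H" using Ex.prems jH by auto
    have upd: "\<And>y. y \<in> H \<Longrightarrow> j \<circ> s(x := e y) = (j \<circ> s)(x := y)" by auto
    have "sat M' s (Ex x p) \<longleftrightarrow> (\<exists>y\<in>H. sat M' (s(x := e y)) p)" by auto
    also have "\<dots> \<longleftrightarrow> (\<exists>y\<in>H. sat M ((j \<circ> s)(x := y)) p)"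
    proof -
      have "sat M' (s(x := e y)) p \<longleftrightarrow> sat M ((j \<circ> s)(x := y)) p" if y: "y \<in> H" for y
      proof -
        have r: "range (s(x := e y)) \<subseteq> dom M'" using Ex.prems y by (auto simp: image_subset_iff)
        have w: "wff fa ra p" using Ex.prems by simp
        show ?thesis using Ex.IH[OF w r] unfolding upd[OF y] .
      qed
      then show ?thesis by auto
    qed
    also have "\<dots> \<longleftrightarrow> (\<exists>a\<in>dom M. sat M ((j \<circ> s)(x := a)) p)"
      using TV[OF M L, of "j \<circ> s"] rs HM unfolding H_def by blast
    finally show ?case by (simp only: sat.simps)
  next
    case (All x p)
    have rs: "range (j \<circ> s) \<subseteq> H" using All.prems jH by auto
    have upd: "\<And>y. y \<in> H \<Longrightarrow> j \<circ> s(x := e y) = (j \<circ> s)(x := y)" by auto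
    have "sat M' s (All x p) \<longleftrightarrow> (\<forall>y\<in>H. sat M' (s(x := e y)) p)" by auto
    also have "\<dots> \<longleftrightarrow> (\<forall>y\<in>H. sat M ((j \<circ> s)(x := y)) p)"
    proof -
      have "sat M' (s(x := e y)) p \<longleftrightarrow> sat M ((j \<circ> s)(x := y)) p" if y: "y \<in> H" for y
      proof -
        have r: "range (s(x := e y)) \<subseteq> dom M'" using All.prems y by (auto simp: image_subset_iff)
        have w: "wff fa ra p" using All.prems by simp
        show ?thesis using All.IH[OF w r] unfolding upd[OF y] .
      qed
      then show ?thesis by auto
    qed
    also have "\<dots> \<longleftrightarrow> (\<forall>a\<in>dom M. sat M ((j \<circ> s)(x := a)) p)"
    proof
      assume A: "\<forall>y\<in>H. sat M ((j \<circ> s)(x := y)) p"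
      show "\<forall>a\<in>dom M. sat M ((j \<circ> s)(x := a)) p"
      proof (rule ccontr)
        assume "\<not> ?thesis"
        then obtain a where "a \<in> dom M" "sat M ((j \<circ> s)(x := a)) (Neg p)" by auto
        then obtain b where "b \<in> H" "sat M ((j \<circ> s)(x := b)) (Neg p)"
          using TV[OF M L rs[unfolded H_def]] unfolding H_def by blast
        then show False using A by auto
      qed
    qed (use HM in auto)
    finally show ?case by (simp only: sat.simps)
  qed auto
  have strM': "is_struc fa M'"
    unfolding is_struc_def
  proof (intro conjI allI impI)
    have "H \<noteq> {}" unfolding H_def by simp
    then show "dom M' \<noteq> {}" by simp
  next
    fix f xs assume A: "length xs = fa f \<and> set xs \<subseteq> dom M'"
    then have "set (map j xs) \<subseteq> H" using jH by auto
    then have "fint M f (map j xs) \<in> H" using clos A by simp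
    then show "fint M' f xs \<in> dom M'" by (simp add: fM')
  qed
  have "j ` dom M' \<subseteq> dom M" using jH HM by auto
  moreover have "inj_on j (dom M')" unfolding j_def dM' by (rule inj_on_inv_into) simp
  moreover have "range L \<subseteq> j ` dom M'"
  proof
    fix z assume "z \<in> range L"
    then obtain b where "z = L b" by auto
    then have "z = ev fa M L (Pt b)" by simp
    then have "z \<in> H" unfolding H_def by (metis rangeI)
    then show "z \<in> j ` dom M'" using je by force
  qed
  ultimately show ?thesis using strM' satl by blast
qed



fun rtrm :: "(nat \<Rightarrow> nat) \<Rightarrow> 'f trm \<Rightarrow> 'f trm" where
  "rtrm \<rho> (Var n) = Var (\<rho> n)"
| "rtrm \<rho> (Fn f ts) = Fn f (map (rtrm \<rho>) ts)"

lemma eval_rtrm: "eval M s (rtrm \<rho> t) = eval M (s \<circ> \<rho>) t"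
proof (induction t)
  case (Fn f ts)
  have "map (eval M s \<circ> rtrm \<rho>) ts = map (eval M (s \<circ> \<rho>)) ts" using Fn by (auto simp: comp_def)
  then show ?case by (simp only: eval.simps rtrm.simps map_map)
qed simp

lemma wft_rtrm: "wft fa (rtrm \<rho> t) = wft fa t"
  by (induction t) auto

fun ratm :: "(nat \<Rightarrow> nat) \<Rightarrow> ('f,'r) fm \<Rightarrow> ('f,'r) fm" where
  "ratm \<rho> (Eq t u) = Eq (rtrm \<rho> t) (rtrm \<rho> u)"
| "ratm \<rho> (Rel r ts) = Rel r (map (rtrm \<rho>) ts)"
| "ratm \<rho> _ = Top"

lemma sat_ratm: "atomic p \<Longrightarrow> sat M s (ratm \<rho> p) = sat M (s \<circ> \<rho>) p"
proof (cases p)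
  case (Rel r ts)
  have "map (eval M s \<circ> rtrm \<rho>) ts = map (eval M (s \<circ> \<rho>)) ts" by (auto simp: eval_rtrm)
  then show ?thesis using Rel by (simp only: sat.simps ratm.simps map_map)
qed (auto simp: eval_rtrm)

lemma wff_ratm: "wff fa ra p \<Longrightarrow> wff fa ra (ratm \<rho> p)"
  by (cases p) (auto simp: wft_rtrm)

lemma pos_qf_ratm: "pos_qf (ratm \<rho> p)"
  by (cases p) auto

fun cj :: "('f,'r) fm list \<Rightarrow> ('f,'r) fm" where
  "cj [] = Top"
| "cj (p # ps) = Conj p (cj ps)"

lemma sat_cj: "sat M s (cj ps) \<longleftrightarrow> (\<forall>p\<in>set ps. sat M s p)"
  by (induction ps) auto

lemma wff_cj: "wff fa ra (cj ps) \<longleftrightarrow> (\<forall>p\<in>set ps. wff fa ra p)"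
  by (induction ps) auto

lemma pos_qf_cj: "(\<forall>p\<in>set ps. pos_qf p) \<Longrightarrow> pos_qf (cj ps)"
  by (induction ps) auto

lemma wff_foldr_Ex: "wff fa ra (foldr Ex xs p) = wff fa ra p"
  by (induction xs) auto

lemma sat_foldr_Ex:
  "sat M \<tau> (foldr Ex xs p) \<longleftrightarrow>
     (\<exists>u. (\<forall>n. n \<notin> set xs \<longrightarrow> u n = \<tau> n) \<and> (\<forall>n\<in>set xs. u n \<in> dom M) \<and> sat M u p)"
proof (induction xs arbitrary: \<tau>)
  case Nil
  show ?case
  proof
    assume "sat M \<tau> (foldr Ex [] p)" then show "\<exists>u. (\<forall>n. n \<notin> set [] \<longrightarrow> u n = \<tau> n) \<and> (\<forall>n\<in>set []. u n \<in> dom M) \<and> sat M u p"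
      by (intro exI[of _ \<tau>]) simp
  next
    assume "\<exists>u. (\<forall>n. n \<notin> set [] \<longrightarrow> u n = \<tau> n) \<and> (\<forall>n\<in>set []. u n \<in> dom M) \<and> sat M u p"
    then obtain u where "\<forall>n. u n = \<tau> n" "sat M u p" by auto
    then have "u = \<tau>" by auto
    then show "sat M \<tau> (foldr Ex [] p)" using \<open>sat M u p\<close> by simp
  qed
next
  case (Cons x xs)
  show ?case
  proof
    assume "sat M \<tau> (foldr Ex (x # xs) p)"
    then obtain a where a: "a \<in> dom M" "sat M (\<tau>(x:=a)) (foldr Ex xs p)" by auto
    from a(2)[unfolded Cons.IH] obtain u where u: "\<forall>n. n \<notin> set xs \<longrightarrow> u n = (\<tau>(x:=a)) n" "\<forall>n\<in>set xs. u n \<in> dom M" "sat M u p"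
      by blast
    have "\<forall>n. n \<notin> set (x#xs) \<longrightarrow> u n = \<tau> n" using u(1) by auto
    moreover have "\<forall>n\<in>set (x#xs). u n \<in> dom M"
    proof
      fix n assume "n \<in> set (x#xs)"
      then show "u n \<in> dom M" by (cases "n \<in> set xs") (use u a in auto)
    qed
    ultimately show "\<exists>u. (\<forall>n. n \<notin> set (x#xs) \<longrightarrow> u n = \<tau> n) \<and> (\<forall>n\<in>set (x#xs). u n \<in> dom M) \<and> sat M u p"
      using u(3) by blast
  next
    assume "\<exists>u. (\<forall>n. n \<notin> set (x#xs) \<longrightarrow> u n = \<tau> n) \<and> (\<forall>n\<in>set (x#xs). u n \<in> dom M) \<and> sat M u p"
    then obtain u where u: "\<forall>n. n \<notin> set (x#xs) \<longrightarrow> u n = \<tau> n" "\<forall>n\<in>set (x#xs). u n \<in> dom M" "sat M u p"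
      by blast
    have "\<forall>n. n \<notin> set xs \<longrightarrow> u n = (\<tau>(x := u x)) n" using u(1) by auto
    moreover have "\<forall>n\<in>set xs. u n \<in> dom M" using u(2) by auto
    ultimately have "sat M (\<tau>(x := u x)) (foldr Ex xs p)" unfolding Cons.IH using u(3) by (intro exI[of _ u] conjI)
    moreover have "u x \<in> dom M" using u(2) by auto
    ultimately show "sat M \<tau> (foldr Ex (x # xs) p)" by auto
  qed
qed



lemma imm_inj:
  assumes "immersion fa ra M N k"
  shows "inj_on k (dom M)"
proof (rule inj_onI)
  fix a a' assume a: "a \<in> dom M" "a' \<in> dom M" "k a = k a'"
  let ?p = "Eq (Var 0) (Var 1) :: ('a,'b) fm"
  let ?s = "\<lambda>n. if n = 0 then a else a'"
  have "coherent ?p" unfolding coherent_def by (intro exI[of _ "[]"]) auto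
  moreover have "range ?s \<subseteq> dom M" using a by auto
  moreover have "sat N (k \<circ> ?s) ?p" using a by simp
  ultimately have "sat M ?s ?p" using assms unfolding immersion_def by (metis wff.simps(3) wft.simps(1))
  then show "a = a'" by simp
qed

definition facts :: "('f \<Rightarrow> nat) \<Rightarrow> ('r \<Rightarrow> nat) \<Rightarrow> ('n,'f,'r) struc \<Rightarrow> (('f,'r) fm \<times> (nat \<Rightarrow> 'n)) set" where
  "facts fa ra N = {(p,s). wff fa ra p \<and> atomic p \<and> range s \<subseteq> dom N \<and> sat N s p}"

lemma realize:
  assumes M: "is_struc fa M" and imm: "immersion fa ra M N k"
    and F: "finite F" "F \<subseteq> facts fa ra N"
  shows "\<exists>g. (\<forall>b\<in>dom N. g b \<in> dom M) \<and> (\<forall>a\<in>dom M. g (k a) = a) \<and> (\<forall>(p,s)\<in>F. sat M (g \<circ> s) p)"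
proof -
  have kinj: "inj_on k (dom M)" by (rule imm_inj[OF imm])
  define ki where "ki = inv_into (dom M) k"
  have kik: "\<And>a. a \<in> dom M \<Longrightarrow> ki (k a) = a" unfolding ki_def using kinj by simp
  have kki: "\<And>b. b \<in> k ` dom M \<Longrightarrow> k (ki b) = b \<and> ki b \<in> dom M"
    unfolding ki_def by (auto intro: inv_into_into simp: f_inv_into_f)
  obtain a0 where a0: "a0 \<in> dom M" using M unfolding is_struc_def by auto
  define P where "P = (\<Union>(p,s)\<in>F. s ` fv p)"
  have finP: "finite P" unfolding P_def using F(1) finite_fv by auto
  have PN: "P \<subseteq> dom N" unfolding P_def using F(2) by (auto simp: facts_def)
  obtain ps where ps: "set ps = P" "distinct ps" using finite_distinct_list[OF finP] by blast
  define len where "len = length ps"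
  define idx where "idx b = (SOME i. i < len \<and> ps ! i = b)" for b
  have idx: "\<And>b. b \<in> P \<Longrightarrow> idx b < len \<and> ps ! idx b = b"
  proof -
    fix b assume "b \<in> P"
    then have "\<exists>i. i < len \<and> ps ! i = b" using ps(1) unfolding len_def by (metis in_set_conv_nth)
    then show "idx b < len \<and> ps ! idx b = b" unfolding idx_def by (rule someI_ex)
  qed
  define \<sigma> where "\<sigma> i = (if i < len then ps ! i else k a0)" for i
  define \<tau> where "\<tau> i = (if i < len \<and> ps ! i \<in> k ` dom M then ki (ps ! i) else a0)" for i
  define xs where "xs = filter (\<lambda>i. ps ! i \<notin> k ` dom M) [0..<len]"
  obtain Fl where Fl: "set Fl = F" using finite_list[OF F(1)] by blast
  define \<psi> where "\<psi> = cj (map (\<lambda>(p,s). ratm (idx \<circ> s) p) Fl)"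
  have Ffact: "\<And>p s. (p,s) \<in> F \<Longrightarrow> wff fa ra p \<and> atomic p \<and> range s \<subseteq> dom N \<and> sat N s p"
    using F(2) unfolding facts_def by auto
  have sP: "\<And>p s n. (p,s) \<in> F \<Longrightarrow> n \<in> fv p \<Longrightarrow> s n \<in> P" unfolding P_def by blast
  have satN: "sat N \<sigma> \<psi>"
    unfolding \<psi>_def sat_cj
  proof
    fix q assume "q \<in> set (map (\<lambda>(p,s). ratm (idx \<circ> s) p) Fl)"
    then obtain p s where q: "q = ratm (idx \<circ> s) p" "(p,s) \<in> F" using Fl by auto
    have "sat N (\<sigma> \<circ> (idx \<circ> s)) p = sat N s p"
      by (rule sat_cong) (use idx sP q(2) in \<open>auto simp: \<sigma>_def\<close>)
    then show "sat N \<sigma> q" using q Ffact[OF q(2)] sat_ratm by (metis comp_assoc)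
  qed
  have wffpsi: "wff fa ra \<psi>" unfolding \<psi>_def wff_cj using Fl Ffact wff_ratm by fastforce
  have posq: "pos_qf \<psi>" unfolding \<psi>_def by (rule pos_qf_cj) (auto simp: pos_qf_ratm)
  have coh: "coherent (foldr Ex xs \<psi>)" unfolding coherent_def using posq by blast
  have rtau: "range \<tau> \<subseteq> dom M" unfolding \<tau>_def using kki a0 by auto
  have h1: "\<sigma> n = (k \<circ> \<tau>) n" if n: "n \<notin> set xs" for n
  proof (cases "n < len")
    case True
    then have "ps ! n \<in> k ` dom M" using n unfolding xs_def by auto
    then show ?thesis using True kki unfolding \<sigma>_def \<tau>_def by auto
  next
    case False then show ?thesis unfolding \<sigma>_def \<tau>_def by auto
  qed
  have h2: "\<sigma> n \<in> dom N" if "n \<in> set xs" for n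
  proof -
    have "n < len" using that unfolding xs_def by auto
    then have "ps ! n \<in> P" using ps(1) unfolding len_def by auto
    then show "\<sigma> n \<in> dom N" using \<open>n < len\<close> PN unfolding \<sigma>_def by auto
  qed
  have "sat N (k \<circ> \<tau>) (foldr Ex xs \<psi>)"
    unfolding sat_foldr_Ex using h1 h2 satN by blast
  moreover have refl: "\<And>p s. wff fa ra p \<Longrightarrow> coherent p \<Longrightarrow> range s \<subseteq> dom M \<Longrightarrow> sat N (k \<circ> s) p \<Longrightarrow> sat M s p"
    using imm unfolding immersion_def by blast
  ultimately have "sat M \<tau> (foldr Ex xs \<psi>)"
    using rtau coh wffpsi wff_foldr_Ex by metis
  then obtain u where u: "\<forall>n. n \<notin> set xs \<longrightarrow> u n = \<tau> n" "\<forall>n\<in>set xs. u n \<in> dom M" "sat M u \<psi>"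
    unfolding sat_foldr_Ex by blast
  define g where "g b = (if b \<in> k ` dom M then ki b else if b \<in> P then u (idx b) else a0)" for b
  have gP: "\<And>b. b \<in> P \<Longrightarrow> g b = u (idx b)"
  proof -
    fix b assume b: "b \<in> P"
    show "g b = u (idx b)"
    proof (cases "b \<in> k ` dom M")
      case True
      then have "idx b \<notin> set xs" using idx[OF b] unfolding xs_def by auto
      then have "u (idx b) = \<tau> (idx b)" using u(1) by auto
      also have "\<dots> = ki b" using idx[OF b] True unfolding \<tau>_def by auto
      finally show ?thesis using True unfolding g_def by auto
    next
      case False then show ?thesis using b unfolding g_def by auto
    qed
  qed
  have "\<forall>b\<in>dom N. g b \<in> dom M"
  proof
    fix b assume "b \<in> dom N"
    show "g b \<in> dom M"
    proof (cases "b \<in> k ` dom M")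
      case True then show ?thesis using kki unfolding g_def by auto
    next
      case False
      show ?thesis
      proof (cases "b \<in> P")
        case True
        then have "idx b \<in> set xs" using idx[OF True] False unfolding xs_def by auto
        then show ?thesis using u(2) False True unfolding g_def by auto
      next
        case False2: False
        then show ?thesis using False a0 unfolding g_def by auto
      qed
    qed
  qed
  moreover have "\<forall>a\<in>dom M. g (k a) = a" using kik unfolding g_def by auto
  moreover have "\<forall>(p,s)\<in>F. sat M (g \<circ> s) p"
  proof (intro ballI, clarify)
    fix p s assume ps': "(p,s) \<in> F"
    have "sat M u (ratm (idx \<circ> s) p)" using u(3) Fl ps' unfolding \<psi>_def sat_cj by auto
    then have "sat M (u \<circ> (idx \<circ> s)) p" using sat_ratm Ffact[OF ps'] by blast
    moreover have "sat M (u \<circ> (idx \<circ> s)) p = sat M (g \<circ> s) p"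
      by (rule sat_cong) (use gP sP ps' in auto)
    ultimately show "sat M (g \<circ> s) p" by simp
  qed
  ultimately show ?thesis by blast
qed



lemma ultraD:
  assumes "ultra U"
  shows "UNIV \<in> U" "{} \<notin> U" "A \<in> U \<Longrightarrow> B \<in> U \<Longrightarrow> A \<inter> B \<in> U"
    "A \<in> U \<Longrightarrow> A \<subseteq> B \<Longrightarrow> B \<in> U" "A \<in> U \<or> - A \<in> U"
  using assms unfolding ultra_def by blast+

lemma U_conj: "ultra U \<Longrightarrow> {i. P i \<and> Q i} \<in> U \<longleftrightarrow> {i. P i} \<in> U \<and> {i. Q i} \<in> U"
proof -
  assume u: "ultra U"
  have e: "{i. P i \<and> Q i} = {i. P i} \<inter> {i. Q i}" by auto
  show ?thesis unfolding e using ultraD[OF u] by (meson inf_le1 inf_le2)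
qed

lemma U_neg: "ultra U \<Longrightarrow> {i. \<not> P i} \<in> U \<longleftrightarrow> {i. P i} \<notin> U"
proof -
  assume u: "ultra U"
  have e: "{i. \<not> P i} = - {i. P i}" by auto
  have "\<not> ({i. P i} \<in> U \<and> - {i. P i} \<in> U)"
  proof
    assume "{i. P i} \<in> U \<and> - {i. P i} \<in> U"
    then have "{i. P i} \<inter> - {i. P i} \<in> U" using ultraD(3)[OF u] by blast
    then show False using ultraD(2)[OF u] by simp
  qed
  then show ?thesis unfolding e using ultraD(5)[OF u] by blast
qed

lemma U_disj: "ultra U \<Longrightarrow> {i. P i \<or> Q i} \<in> U \<longleftrightarrow> {i. P i} \<in> U \<or> {i. Q i} \<in> U"
proof -
  assume u: "ultra U"
  have "{i. P i \<or> Q i} \<in> U \<longleftrightarrow> {i. \<not> (\<not> P i \<and> \<not> Q i)} \<in> U" by simp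
  also have "\<dots> \<longleftrightarrow> \<not> ({i. \<not> P i} \<in> U \<and> {i. \<not> Q i} \<in> U)"
    using U_neg[OF u, of "\<lambda>i. \<not> P i \<and> \<not> Q i"] U_conj[OF u] by simp
  also have "\<dots> \<longleftrightarrow> {i. P i} \<in> U \<or> {i. Q i} \<in> U" using U_neg[OF u] by simp
  finally show ?thesis .
qed

lemma U_imp: "ultra U \<Longrightarrow> {i. P i \<longrightarrow> Q i} \<in> U \<longleftrightarrow> ({i. P i} \<in> U \<longrightarrow> {i. Q i} \<in> U)"
proof -
  assume u: "ultra U"
  have "{i. P i \<longrightarrow> Q i} \<in> U \<longleftrightarrow> {i. \<not> P i \<or> Q i} \<in> U" by simp
  also have "\<dots> \<longleftrightarrow> {i. \<not> P i} \<in> U \<or> {i. Q i} \<in> U" by (rule U_disj[OF u])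
  finally show ?thesis using U_neg[OF u] by auto
qed

lemma U_const: "ultra U \<Longrightarrow> {i. P} \<in> U \<longleftrightarrow> P"
  using ultraD(1,2) by (cases P) auto

lemma U_cong: "ultra U \<Longrightarrow> W \<in> U \<Longrightarrow> (\<And>i. i \<in> W \<Longrightarrow> P i \<longleftrightarrow> Q i) \<Longrightarrow> {i. P i} \<in> U \<longleftrightarrow> {i. Q i} \<in> U"
proof -
  assume u: "ultra U" and W: "W \<in> U" and e: "\<And>i. i \<in> W \<Longrightarrow> P i \<longleftrightarrow> Q i"
  have a: "W \<inter> {i. P i} \<subseteq> {i. Q i}" "W \<inter> {i. Q i} \<subseteq> {i. P i}" using e by auto
  show ?thesis using ultraD(3,4)[OF u] W a by meson
qed

lemma U_list: "ultra U \<Longrightarrow> (\<And>x. x \<in> set xs \<Longrightarrow> {i. P x i} \<in> U) \<Longrightarrow> {i. \<forall>x\<in>set xs. P x i} \<in> U"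
proof (induction xs)
  case Nil then show ?case using ultraD(1)[OF Nil(1)] by simp
next
  case (Cons a xs)
  have "{i. P a i \<and> (\<forall>x\<in>set xs. P x i)} \<in> U"
    using Cons U_conj[OF Cons(2)] by auto
  then show ?case by simp
qed

definition cls :: "'i set set \<Rightarrow> ('i \<Rightarrow> 'm) \<Rightarrow> ('i \<Rightarrow> 'm) set" where
  "cls U f = {f'. {i. f i = f' i} \<in> U}"

definition rep :: "('i \<Rightarrow> 'm) set \<Rightarrow> 'i \<Rightarrow> 'm" where
  "rep c = (SOME f. f \<in> c)"

lemma cls_eq: "ultra U \<Longrightarrow> cls U f = cls U f' \<longleftrightarrow> {i. f i = f' i} \<in> U"
proof
  assume u: "ultra U" and e: "cls U f = cls U f'"
  have "f' \<in> cls U f'" unfolding cls_def using ultraD(1)[OF u] by simp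
  then have "f' \<in> cls U f" using e by simp
  then show "{i. f i = f' i} \<in> U" unfolding cls_def by simp
next
  assume u: "ultra U" and e: "{i. f i = f' i} \<in> U"
  show "cls U f = cls U f'"
  proof (rule set_eqI)
    fix g
    have "{i. f i = g i} \<in> U \<longleftrightarrow> {i. f' i = g i} \<in> U"
      by (rule U_cong[OF u e]) auto
    then show "g \<in> cls U f \<longleftrightarrow> g \<in> cls U f'" unfolding cls_def by simp
  qed
qed

lemma rep_cls: "ultra U \<Longrightarrow> {i. rep (cls U f) i = f i} \<in> U"
proof -
  assume u: "ultra U"
  have "f \<in> cls U f" unfolding cls_def using ultraD(1)[OF u] by simp
  then have "rep (cls U f) \<in> cls U f" unfolding rep_def by (rule someI[where P="\<lambda>g. g \<in> cls U f"])
  then have "{i. f i = rep (cls U f) i} \<in> U" unfolding cls_def by simp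
  moreover have "{i. f i = rep (cls U f) i} = {i. rep (cls U f) i = f i}" by auto
  ultimately show ?thesis by simp
qed

definition UP :: "'i set set \<Rightarrow> ('m,'f,'r) struc \<Rightarrow> (('i \<Rightarrow> 'm) set, 'f, 'r) struc" where
  "UP U M = \<lparr>dom = {cls U f | f. \<forall>i. f i \<in> dom M},
     fint = (\<lambda>f cs. cls U (\<lambda>i. fint M f (map (\<lambda>c. rep c i) cs))),
     rint = (\<lambda>r cs. {i. rint M r (map (\<lambda>c. rep c i) cs)} \<in> U)\<rparr>"

lemma UP_simps:
  "dom (UP U M) = {cls U f | f. \<forall>i. f i \<in> dom M}"
  "fint (UP U M) f cs = cls U (\<lambda>i. fint M f (map (\<lambda>c. rep c i) cs))"
  "rint (UP U M) r cs = ({i. rint M r (map (\<lambda>c. rep c i) cs)} \<in> U)"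
  by (simp_all add: UP_def)

lemma eval_UP:
  assumes u: "ultra U"
  shows "eval (UP U M) (\<lambda>n. cls U (\<sigma> n)) t = cls U (\<lambda>i. eval M (\<lambda>n. \<sigma> n i) t)"
proof (induction t)
  case (Var n) then show ?case by simp
next
  case (Fn f ts)
  define E where "E t = (\<lambda>i. eval M (\<lambda>n. \<sigma> n i) t)" for t
  have "map (eval (UP U M) (\<lambda>n. cls U (\<sigma> n))) ts = map (\<lambda>t. cls U (E t)) ts"
    using Fn unfolding E_def by auto
  then have l0: "eval (UP U M) (\<lambda>n. cls U (\<sigma> n)) (Fn f ts) = fint (UP U M) f (map (\<lambda>t. cls U (E t)) ts)"
    by (simp only: eval.simps)
  have l: "eval (UP U M) (\<lambda>n. cls U (\<sigma> n)) (Fn f ts) =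
      cls U (\<lambda>i. fint M f (map (\<lambda>t. rep (cls U (E t)) i) ts))"
    unfolding l0 UP_simps map_map comp_def ..
  have W: "{i. \<forall>t\<in>set ts. rep (cls U (E t)) i = E t i} \<in> U"
    by (rule U_list[OF u]) (rule rep_cls[OF u])
  have "{i. fint M f (map (\<lambda>t. rep (cls U (E t)) i) ts) = fint M f (map (\<lambda>t. E t i) ts)} \<in> U"
    by (rule ultraD(4)[OF u W]) (auto intro!: arg_cong[where f="fint M f"])
  then have "cls U (\<lambda>i. fint M f (map (\<lambda>t. rep (cls U (E t)) i) ts)) = cls U (\<lambda>i. fint M f (map (\<lambda>t. E t i) ts))"
    using cls_eq[OF u] by blast
  also have "(\<lambda>i. fint M f (map (\<lambda>t. E t i) ts)) = (\<lambda>i. eval M (\<lambda>n. \<sigma> n i) (Fn f ts))"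
    unfolding E_def by (simp add: comp_def)
  finally show ?case using l by simp
qed

lemma los:
  assumes u: "ultra U" and M: "is_struc fa M"
  shows "sat (UP U M) (\<lambda>n. cls U (\<sigma> n)) p \<longleftrightarrow> {i. sat M (\<lambda>n. \<sigma> n i) p} \<in> U"
proof (induction p arbitrary: \<sigma>)
  case Bot then show ?case using U_const[OF u, of False] by simp
next
  case Top then show ?case using U_const[OF u, of True] by simp
next
  case (Eq t u') then show ?case by (simp add: eval_UP[OF u] cls_eq[OF u])
next
  case (Rel r ts)
  define E where "E t = (\<lambda>i. eval M (\<lambda>n. \<sigma> n i) t)" for t
  have m: "map (eval (UP U M) (\<lambda>n. cls U (\<sigma> n))) ts = map (\<lambda>t. cls U (E t)) ts"
    unfolding E_def by (simp add: eval_UP[OF u])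
  have W: "{i. \<forall>t\<in>set ts. rep (cls U (E t)) i = E t i} \<in> U"
    by (rule U_list[OF u]) (rule rep_cls[OF u])
  have "{i. rint M r (map (\<lambda>c. rep c i) (map (\<lambda>t. cls U (E t)) ts))} \<in> U \<longleftrightarrow>
        {i. rint M r (map (\<lambda>t. E t i) ts)} \<in> U"
    by (rule U_cong[OF u W]) (auto intro!: arg_cong[where f="rint M r"])
  moreover have "(\<lambda>i. rint M r (map (\<lambda>t. E t i) ts)) = (\<lambda>i. sat M (\<lambda>n. \<sigma> n i) (Rel r ts))"
    unfolding E_def by (simp add: comp_def)
  ultimately show ?case by (simp only: sat.simps m UP_simps)
next
  case (Neg p) then show ?case using U_neg[OF u] by simp
next
  case (Conj p q) then show ?case using U_conj[OF u] by simp
next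
  case (Disj p q) then show ?case using U_disj[OF u] by simp
next
  case (Imp p q) then show ?case using U_imp[OF u] by simp
next
  case (Ex x p)
  have upd: "(\<lambda>n. cls U (\<sigma> n))(x := cls U f) = (\<lambda>n. cls U ((\<sigma>(x := f)) n))" for f by (auto simp: fun_eq_iff)
  have upd2: "(\<lambda>n. (\<sigma>(x := f)) n i) = (\<lambda>n. \<sigma> n i)(x := f i)" for f i by auto
  have IH: "sat (UP U M) ((\<lambda>n. cls U (\<sigma> n))(x := cls U f)) p \<longleftrightarrow> {i. sat M ((\<lambda>n. \<sigma> n i)(x := f i)) p} \<in> U" for f
    unfolding upd Ex.IH upd2 ..
  show ?case
  proof
    assume "sat (UP U M) (\<lambda>n. cls U (\<sigma> n)) (Ex x p)"
    then obtain f where f: "\<forall>i. f i \<in> dom M" "sat (UP U M) ((\<lambda>n. cls U (\<sigma> n))(x := cls U f)) p"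
      by (auto simp: UP_simps)
    then have "{i. sat M ((\<lambda>n. \<sigma> n i)(x := f i)) p} \<in> U" using IH by blast
    then show "{i. sat M (\<lambda>n. \<sigma> n i) (Ex x p)} \<in> U"
      by (rule ultraD(4)[OF u]) (use f(1) in auto)
  next
    assume A: "{i. sat M (\<lambda>n. \<sigma> n i) (Ex x p)} \<in> U"
    define f where "f i = (SOME a. a \<in> dom M \<and> (sat M ((\<lambda>n. \<sigma> n i)(x := a)) p \<or> \<not> (\<exists>a\<in>dom M. sat M ((\<lambda>n. \<sigma> n i)(x := a)) p)))" for i
    have f: "f i \<in> dom M \<and> (sat M ((\<lambda>n. \<sigma> n i)(x := f i)) p \<or> \<not> (\<exists>a\<in>dom M. sat M ((\<lambda>n. \<sigma> n i)(x := a)) p))" for i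
    proof -
      obtain a0 where "a0 \<in> dom M" using M unfolding is_struc_def by auto
      then have "\<exists>a. a \<in> dom M \<and> (sat M ((\<lambda>n. \<sigma> n i)(x := a)) p \<or> \<not> (\<exists>a\<in>dom M. sat M ((\<lambda>n. \<sigma> n i)(x := a)) p))"
        by blast
      then show ?thesis unfolding f_def by (rule someI_ex)
    qed
    have "{i. sat M ((\<lambda>n. \<sigma> n i)(x := f i)) p} \<in> U"
      by (rule ultraD(4)[OF u A]) (use f in auto)
    then have "sat (UP U M) ((\<lambda>n. cls U (\<sigma> n))(x := cls U f)) p" using IH by blast
    moreover have "cls U f \<in> dom (UP U M)" using f by (auto simp: UP_simps)
    ultimately show "sat (UP U M) (\<lambda>n. cls U (\<sigma> n)) (Ex x p)" by auto
  qed
next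
  case (All x p)
  have upd: "(\<lambda>n. cls U (\<sigma> n))(x := cls U f) = (\<lambda>n. cls U ((\<sigma>(x := f)) n))" for f by (auto simp: fun_eq_iff)
  have upd2: "(\<lambda>n. (\<sigma>(x := f)) n i) = (\<lambda>n. \<sigma> n i)(x := f i)" for f i by auto
  have IH: "sat (UP U M) ((\<lambda>n. cls U (\<sigma> n))(x := cls U f)) p \<longleftrightarrow> {i. sat M ((\<lambda>n. \<sigma> n i)(x := f i)) p} \<in> U" for f
    unfolding upd All.IH upd2 ..
  show ?case
  proof
    assume A: "sat (UP U M) (\<lambda>n. cls U (\<sigma> n)) (All x p)"
    show "{i. sat M (\<lambda>n. \<sigma> n i) (All x p)} \<in> U"
    proof (rule ccontr)
      assume "{i. sat M (\<lambda>n. \<sigma> n i) (All x p)} \<notin> U"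
      then have B: "{i. \<not> sat M (\<lambda>n. \<sigma> n i) (All x p)} \<in> U" using U_neg[OF u] by blast
      define f where "f i = (SOME a. a \<in> dom M \<and> (\<not> sat M ((\<lambda>n. \<sigma> n i)(x := a)) p \<or> (\<forall>a\<in>dom M. sat M ((\<lambda>n. \<sigma> n i)(x := a)) p)))" for i
      have f: "f i \<in> dom M \<and> (\<not> sat M ((\<lambda>n. \<sigma> n i)(x := f i)) p \<or> (\<forall>a\<in>dom M. sat M ((\<lambda>n. \<sigma> n i)(x := a)) p))" for i
      proof -
        obtain a0 where "a0 \<in> dom M" using M unfolding is_struc_def by auto
        then have "\<exists>a. a \<in> dom M \<and> (\<not> sat M ((\<lambda>n. \<sigma> n i)(x := a)) p \<or> (\<forall>a\<in>dom M. sat M ((\<lambda>n. \<sigma> n i)(x := a)) p))"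
          by blast
        then show ?thesis unfolding f_def by (rule someI_ex)
      qed
      have "cls U f \<in> dom (UP U M)" using f by (auto simp: UP_simps)
      then have "sat (UP U M) ((\<lambda>n. cls U (\<sigma> n))(x := cls U f)) p" using A by simp
      then have C: "{i. sat M ((\<lambda>n. \<sigma> n i)(x := f i)) p} \<in> U" using IH by blast
      have "{i. \<not> sat M (\<lambda>n. \<sigma> n i) (All x p)} \<inter> {i. sat M ((\<lambda>n. \<sigma> n i)(x := f i)) p} \<in> U"
        using ultraD(3)[OF u B C] .
      moreover have "{i. \<not> sat M (\<lambda>n. \<sigma> n i) (All x p)} \<inter> {i. sat M ((\<lambda>n. \<sigma> n i)(x := f i)) p} = {}"
        using f by auto
      ultimately show False using ultraD(2)[OF u] by simp
    qed
  next
    assume A: "{i. sat M (\<lambda>n. \<sigma> n i) (All x p)} \<in> U"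
    show "sat (UP U M) (\<lambda>n. cls U (\<sigma> n)) (All x p)"
    proof (simp only: sat.simps, intro ballI)
      fix c assume "c \<in> dom (UP U M)"
      then obtain f where f: "c = cls U f" "\<forall>i. f i \<in> dom M" by (auto simp: UP_simps)
      have "{i. sat M ((\<lambda>n. \<sigma> n i)(x := f i)) p} \<in> U"
        by (rule ultraD(4)[OF u A]) (use f in auto)
      then show "sat (UP U M) ((\<lambda>n. cls U (\<sigma> n))(x := c)) p" using IH f(1) by blast
    qed
  qed
qed



lemma UP_struc:
  assumes u: "ultra U" and M: "is_struc fa M"
  shows "is_struc fa (UP U M)"
  unfolding is_struc_def
proof (intro conjI allI impI)
  obtain a0 where a0: "a0 \<in> dom M" using M unfolding is_struc_def by auto
  have "cls U (\<lambda>i. a0) \<in> dom (UP U M)" using a0 by (auto simp: UP_simps)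
  then show "dom (UP U M) \<noteq> {}" by auto
next
  fix f cs assume A: "length cs = fa f \<and> set cs \<subseteq> dom (UP U M)"
  obtain a0 where a0: "a0 \<in> dom M" using M unfolding is_struc_def by auto
  have each: "{i. rep c i \<in> dom M} \<in> U" if "c \<in> set cs" for c
  proof -
    have "c \<in> dom (UP U M)" using A that by auto
    then obtain g where g: "c = cls U g" "\<forall>i. g i \<in> dom M" by (auto simp: UP_simps)
    show ?thesis by (rule ultraD(4)[OF u rep_cls[OF u, of g]]) (use g in auto)
  qed
  have W: "{i. \<forall>c\<in>set cs. rep c i \<in> dom M} \<in> U" by (rule U_list[OF u]) (rule each)
  define \<phi> where "\<phi> i = fint M f (map (\<lambda>c. rep c i) cs)" for i
  define \<psi> where "\<psi> i = (if \<phi> i \<in> dom M then \<phi> i else a0)" for i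
  have "{i. \<phi> i \<in> dom M} \<in> U"
  proof (rule ultraD(4)[OF u W], rule subsetI)
    fix i assume "i \<in> {i. \<forall>c\<in>set cs. rep c i \<in> dom M}"
    then have "set (map (\<lambda>c. rep c i) cs) \<subseteq> dom M" "length (map (\<lambda>c. rep c i) cs) = fa f" using A by auto
    then show "i \<in> {i. \<phi> i \<in> dom M}" using M unfolding is_struc_def \<phi>_def by blast
  qed
  then have "{i. \<phi> i = \<psi> i} \<in> U" by (rule ultraD(4)[OF u]) (auto simp: \<psi>_def)
  then have "cls U \<phi> = cls U \<psi>" using cls_eq[OF u] by blast
  moreover have "cls U \<psi> \<in> dom (UP U M)" using a0 by (auto simp: UP_simps \<psi>_def)
  moreover have "fint (UP U M) f cs = cls U \<phi>" unfolding UP_simps by (rule arg_cong[where f="cls U"]) (simp add: \<phi>_def fun_eq_iff)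
  ultimately show "fint (UP U M) f cs \<in> dom (UP U M)" by simp
qed

lemma cls_rep: "ultra U \<Longrightarrow> c \<in> dom (UP U M) \<Longrightarrow> cls U (rep c) = c"
proof -
  assume u: "ultra U" and c: "c \<in> dom (UP U M)"
  then obtain g where g: "c = cls U g" by (auto simp: UP_simps)
  show ?thesis using rep_cls[OF u, of g] cls_eq[OF u] g by blast
qed

lemma UP_sat:
  assumes u: "ultra U" and M: "is_struc fa M" and r: "range \<tau> \<subseteq> dom (UP U M)"
  shows "sat (UP U M) \<tau> p \<longleftrightarrow> {i. sat M (\<lambda>n. rep (\<tau> n) i) p} \<in> U"
proof -
  have "\<tau> = (\<lambda>n. cls U (rep (\<tau> n)))"
  proof (rule ext)
    fix n
    have "\<tau> n \<in> dom (UP U M)" using r by auto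
    then show "\<tau> n = cls U (rep (\<tau> n))" using cls_rep[OF u] by metis
  qed
  then have "sat (UP U M) \<tau> p = sat (UP U M) (\<lambda>n. cls U (rep (\<tau> n))) p" by simp
  also have "\<dots> \<longleftrightarrow> {i. sat M (\<lambda>n. rep (\<tau> n) i) p} \<in> U" by (rule los[OF u M])
  finally show ?thesis .
qed

lemma UP_model:
  assumes u: "ultra U" and T: "is_theory fa ra T" and M: "is_model fa T M"
  shows "is_model fa T (UP U M)"
proof -
  have Ms: "is_struc fa M" using M unfolding is_model_def by simp
  obtain a0 where a0: "a0 \<in> dom M" using Ms unfolding is_struc_def by auto
  have "sat (UP U M) \<tau> p" if p: "p \<in> T" and r: "range \<tau> \<subseteq> dom (UP U M)" for p \<tau>
  proof -
    have fv: "fv p = {}" using T p unfolding is_theory_def sentence_def by auto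
    have "sat M (\<lambda>n. rep (\<tau> n) i) p = sat M (\<lambda>n. a0) p" for i by (rule sat_cong) (simp add: fv)
    moreover have "sat M (\<lambda>n. a0) p" using M p a0 unfolding is_model_def by auto
    ultimately have "{i. sat M (\<lambda>n. rep (\<tau> n) i) p} = UNIV" by auto
    then show ?thesis using UP_sat[OF u Ms r] ultraD(1)[OF u] by simp
  qed
  then show ?thesis using UP_struc[OF u Ms] unfolding is_model_def by blast
qed

lemma diag_elem:
  assumes u: "ultra U" and M: "is_struc fa M"
  shows "sat (UP U M) ((\<lambda>a. cls U (\<lambda>i. a)) \<circ> s) p \<longleftrightarrow> sat M s p"
proof -
  have "(\<lambda>a. cls U (\<lambda>i. a)) \<circ> s = (\<lambda>n. cls U (\<lambda>i. s n))" by (auto simp: fun_eq_iff)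
  then have "sat (UP U M) ((\<lambda>a. cls U (\<lambda>i. a)) \<circ> s) p \<longleftrightarrow> {i. sat M (\<lambda>n. s n) p} \<in> U"
    using los[OF u M, of "\<lambda>n i. s n"] by simp
  then show ?thesis using U_const[OF u] by simp
qed



lemma elem_model:
  assumes T: "is_theory fa ra T" and D: "is_model fa T D" and C: "is_struc fa C"
    and jd: "j ` dom C \<subseteq> dom D"
    and el: "\<forall>p s. wff fa ra p \<and> range s \<subseteq> dom C \<longrightarrow> (sat C s p \<longleftrightarrow> sat D (j \<circ> s) p)"
  shows "is_model fa T C"
proof -
  have "sat C s p" if p: "p \<in> T" and r: "range s \<subseteq> dom C" for p s
  proof -
    have w: "wff fa ra p" using T p unfolding is_theory_def sentence_def by auto
    have "range (j \<circ> s) \<subseteq> dom D" using r jd by auto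
    then have "sat D (j \<circ> s) p" using D p unfolding is_model_def by blast
    then show ?thesis using el w r by blast
  qed
  then show ?thesis using C unfolding is_model_def by blast
qed

lemma amalg:
  fixes M N :: "(('f,'r) K,'f,'r) struc" and k :: "('f,'r) K \<Rightarrow> ('f,'r) K"
  assumes T: "is_theory fa ra T" and M: "is_model fa T M" and N: "is_model fa T N"
    and imm: "immersion fa ra M N k"
  shows "\<exists>(C::(('f,'r) K,'f,'r) struc) d g. is_model fa T C \<and> hom fa ra N C g \<and>
     (\<forall>a\<in>dom M. d a \<in> dom C) \<and> (\<forall>a\<in>dom M. g (k a) = d a) \<and>
     (\<forall>p s. wff fa ra p \<and> range s \<subseteq> dom M \<longrightarrow> (sat M s p \<longleftrightarrow> sat C (d \<circ> s) p))"
proof -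
  have Ms: "is_struc fa M" and Ns: "is_struc fa N" using M N unfolding is_model_def by auto
  define Fa where "Fa = facts fa ra N"
  define cone where "cone F0 = {F. finite F \<and> F0 \<subseteq> F \<and> F \<subseteq> Fa}" for F0
  define Base where "Base = {A. \<exists>F0. finite F0 \<and> F0 \<subseteq> Fa \<and> cone F0 \<subseteq> A}"
  have "filt Base"
  proof (rule filtI)
    show "UNIV \<in> Base" unfolding Base_def by blast
    show "{} \<notin> Base"
    proof
      assume "{} \<in> Base"
      then obtain F0 where "finite F0" "F0 \<subseteq> Fa" "cone F0 \<subseteq> {}" unfolding Base_def by blast
      moreover have "F0 \<in> cone F0" unfolding cone_def using \<open>finite F0\<close> \<open>F0 \<subseteq> Fa\<close> by simp
      ultimately show False by blast
    qed
  next
    fix A B assume "A \<in> Base" "B \<in> Base"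
    then obtain F0 F1 where F: "finite F0" "F0 \<subseteq> Fa" "cone F0 \<subseteq> A" "finite F1" "F1 \<subseteq> Fa" "cone F1 \<subseteq> B"
      unfolding Base_def by blast
    have "cone (F0 \<union> F1) \<subseteq> cone F0" "cone (F0 \<union> F1) \<subseteq> cone F1" unfolding cone_def by auto
    then have c: "cone (F0 \<union> F1) \<subseteq> A \<inter> B" using F(3,6) by auto
    have "finite (F0 \<union> F1)" "F0 \<union> F1 \<subseteq> Fa" using F by auto
    then show "A \<inter> B \<in> Base" unfolding Base_def using c by blast
  next
    fix A B assume "A \<in> Base" "A \<subseteq> B"
    then show "B \<in> Base" unfolding Base_def by blast
  qed
  then obtain U where u: "ultra U" and BU: "Base \<subseteq> U" using ultra_exists by blast
  have kinj: "inj_on k (dom M)" by (rule imm_inj[OF imm])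
  obtain a0 where a0: "a0 \<in> dom M" using Ms unfolding is_struc_def by auto
  define Pg where "Pg g F = ((\<forall>b\<in>dom N. g b \<in> dom M) \<and> (\<forall>a\<in>dom M. g (k a) = a) \<and> (\<forall>(p,s)\<in>F. sat M (g \<circ> s) p))" for g F
  define g0 where "g0 b = (if b \<in> k ` dom M then inv_into (dom M) k b else a0)" for b
  define gF where "gF F = (if finite F \<and> F \<subseteq> Fa then (SOME g. Pg g F) else g0)" for F
  have g0p: "(\<forall>b\<in>dom N. g0 b \<in> dom M) \<and> (\<forall>a\<in>dom M. g0 (k a) = a)"
    using a0 kinj unfolding g0_def by (auto intro: inv_into_into)
  have gFgood: "Pg (gF F) F" if "finite F" "F \<subseteq> Fa" for F
  proof -
    have "\<exists>g. Pg g F" unfolding Pg_def by (rule realize[OF Ms imm that[unfolded Fa_def]])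
    then have "Pg (SOME g. Pg g F) F" by (rule someI_ex)
    then show ?thesis using that unfolding gF_def by simp
  qed
  have gFp: "(\<forall>b\<in>dom N. gF F b \<in> dom M) \<and> (\<forall>a\<in>dom M. gF F (k a) = a)" for F
  proof (cases "finite F \<and> F \<subseteq> Fa")
    case True then show ?thesis using gFgood unfolding Pg_def by blast
  next
    case False then have "gF F = g0" unfolding gF_def by (simp only: if_False)
    then show ?thesis using g0p by simp
  qed
  define g :: "('f,'r) K \<Rightarrow> ((('f,'r) fm \<times> (nat \<Rightarrow> ('f,'r) K)) set \<Rightarrow> ('f,'r) K) set"
    where "g b = cls U (\<lambda>F. gF F b)" for b
  define d :: "('f,'r) K \<Rightarrow> ((('f,'r) fm \<times> (nat \<Rightarrow> ('f,'r) K)) set \<Rightarrow> ('f,'r) K) set"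
    where "d a = cls U (\<lambda>F. a)" for a
  define D where "D = UP U M"
  have Dm: "is_model fa T D" unfolding D_def by (rule UP_model[OF u T M])
  have Ds: "is_struc fa D" using Dm unfolding is_model_def by simp
  have gdom: "g b \<in> dom D" if "b \<in> dom N" for b
    using gFp that unfolding g_def D_def by (auto simp: UP_simps)
  have ddom: "d a \<in> dom D" if "a \<in> dom M" for a
    using that unfolding d_def D_def by (auto simp: UP_simps)
  have gk: "g (k a) = d a" if "a \<in> dom M" for a
    unfolding g_def d_def using gFp that by simp
  have delem: "sat M s p \<longleftrightarrow> sat D (d \<circ> s) p" for s p
    using diag_elem[OF u Ms, of s p] unfolding D_def d_def[abs_def] by simp
  have ghom: "sat D (g \<circ> s) p" if p: "wff fa ra p" "atomic p" and s: "range s \<subseteq> dom N" and sp: "sat N s p" for p s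
  proof -
    have ps: "(p,s) \<in> Fa" unfolding Fa_def facts_def using p s sp by simp
    have "cone {(p,s)} \<in> Base" unfolding Base_def using ps by blast
    then have cU: "cone {(p,s)} \<in> U" using BU by blast
    have "{F. sat M (\<lambda>n. gF F (s n)) p} \<in> U"
    proof (rule ultraD(4)[OF u cU], rule subsetI)
      fix F assume "F \<in> cone {(p,s)}"
      then have "finite F" "F \<subseteq> Fa" "(p,s) \<in> F" unfolding cone_def by auto
      then have "sat M (gF F \<circ> s) p" using gFgood unfolding Pg_def by blast
      then show "F \<in> {F. sat M (\<lambda>n. gF F (s n)) p}" by (simp add: comp_def)
    qed
    moreover have "g \<circ> s = (\<lambda>n. cls U (\<lambda>F. gF F (s n)))" unfolding g_def by (simp add: comp_def)
    ultimately show ?thesis unfolding D_def using los[OF u Ms, of "\<lambda>n F. gF F (s n)" p] by simp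
  qed
  define L where "L bx = (case bx of (True, x) \<Rightarrow> (if x \<in> dom N then g x else d a0)
       | (False, x) \<Rightarrow> (if x \<in> dom M then d x else d a0))" for bx
  have rL: "range L \<subseteq> dom D"
  proof
    fix z assume "z \<in> range L"
    then obtain b x where z: "z = L (b, x)" by (metis surj_pair rangeE)
    show "z \<in> dom D"
    proof (cases b)
      case True then show ?thesis using z gdom ddom a0 unfolding L_def by simp
    next
      case False then show ?thesis using z gdom ddom a0 unfolding L_def by simp
    qed
  qed
  have "\<exists>(C :: (('f,'r) K,'f,'r) struc) j. is_struc fa C \<and> j ` dom C \<subseteq> dom D \<and>
     inj_on j (dom C) \<and> range L \<subseteq> j ` dom C \<and>
     (\<forall>p s. wff fa ra p \<and> range s \<subseteq> dom C \<longrightarrow> (sat C s p \<longleftrightarrow> sat D (j \<circ> s) p))"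
    by (rule LS[OF Ds rL])
  then obtain C :: "(('f,'r) K,'f,'r) struc" and j where C: "is_struc fa C" "j ` dom C \<subseteq> dom D"
    "inj_on j (dom C)" "range L \<subseteq> j ` dom C"
    and el: "\<forall>p s. wff fa ra p \<and> range s \<subseteq> dom C \<longrightarrow> (sat C s p \<longleftrightarrow> sat D (j \<circ> s) p)"
    by (elim exE conjE)
  define ji where "ji = inv_into (dom C) j"
  have jji: "j (ji z) = z \<and> ji z \<in> dom C" if "z \<in> range L" for z
  proof -
    have "z \<in> j ` dom C" using that C(4) by blast
    then show ?thesis unfolding ji_def by (simp add: f_inv_into_f inv_into_into)
  qed
  have gL: "g b \<in> range L" if "b \<in> dom N" for b
  proof -
    have "L (True, b) = g b" using that unfolding L_def by simp
    then show ?thesis by (metis rangeI)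
  qed
  have dL: "d a \<in> range L" if "a \<in> dom M" for a
  proof -
    have "L (False, a) = d a" using that unfolding L_def by simp
    then show ?thesis by (metis rangeI)
  qed
  define d' where "d' a = ji (d a)" for a
  define g' where "g' b = ji (g b)" for b
  have Cm: "is_model fa T C" by (rule elem_model[OF T Dm C(1) C(2) el])
  have "hom fa ra N C g'"
    unfolding hom_def
  proof (intro conjI allI impI)
    show "g' ` dom N \<subseteq> dom C"
    proof
      fix z assume "z \<in> g' ` dom N"
      then obtain b where "b \<in> dom N" "z = g' b" by blast
      then show "z \<in> dom C" using jji[OF gL[of b]] unfolding g'_def by simp
    qed
  next
    fix p s assume A: "wff fa ra p \<and> atomic p \<and> range s \<subseteq> dom N \<and> sat N s p"
    then have "sat D (g \<circ> s) p" using ghom by blast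
    moreover have "g \<circ> s = j \<circ> (g' \<circ> s)"
    proof (rule ext)
      fix n have "s n \<in> dom N" using A by auto
      then show "(g \<circ> s) n = (j \<circ> (g' \<circ> s)) n" using jji[OF gL[of "s n"]] unfolding g'_def by simp
    qed
    moreover have "range (g' \<circ> s) \<subseteq> dom C"
    proof
      fix z assume "z \<in> range (g' \<circ> s)"
      then obtain n where "z = g' (s n)" by auto
      moreover have "s n \<in> dom N" using A by auto
      ultimately show "z \<in> dom C" using jji[OF gL[of "s n"]] unfolding g'_def by simp
    qed
    ultimately show "sat C (g' \<circ> s) p" using el[rule_format, of p "g' \<circ> s"] A by simp
  qed
  moreover have "\<forall>a\<in>dom M. d' a \<in> dom C"
  proof
    fix a assume "a \<in> dom M"
    then show "d' a \<in> dom C" using jji[OF dL[of a]] unfolding d'_def by simp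
  qed
  moreover have "\<forall>a\<in>dom M. g' (k a) = d' a" using gk unfolding g'_def d'_def by simp
  moreover have "\<forall>p s. wff fa ra p \<and> range s \<subseteq> dom M \<longrightarrow> (sat M s p \<longleftrightarrow> sat C (d' \<circ> s) p)"
  proof (intro allI impI)
    fix p :: "('f,'r) fm" and s :: "nat \<Rightarrow> ('f,'r) K"
    assume A: "wff fa ra p \<and> range s \<subseteq> dom M"
    have e: "d \<circ> s = j \<circ> (d' \<circ> s)"
    proof (rule ext)
      fix n have "s n \<in> dom M" using A by auto
      then show "(d \<circ> s) n = (j \<circ> (d' \<circ> s)) n" using jji[OF dL[of "s n"]] unfolding d'_def by simp
    qed
    have r: "range (d' \<circ> s) \<subseteq> dom C"
    proof
      fix z assume "z \<in> range (d' \<circ> s)"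
      then obtain n where "z = d' (s n)" by auto
      moreover have "s n \<in> dom M" using A by auto
      ultimately show "z \<in> dom C" using jji[OF dL[of "s n"]] unfolding d'_def by simp
    qed
    have "sat C (d' \<circ> s) p \<longleftrightarrow> sat D (j \<circ> (d' \<circ> s)) p" using el[rule_format, of p "d' \<circ> s"] A r by simp
    then show "sat M s p \<longleftrightarrow> sat C (d' \<circ> s) p" using delem[of s p] e by simp
  qed
  ultimately show ?thesis using Cm by (intro exI[of _ C] exI[of _ d'] exI[of _ g']) simp
qed



lemma main_K:
  fixes fa :: "'f \<Rightarrow> nat" and ra :: "'r \<Rightarrow> nat" and T :: "('f,'r) fm set"
  assumes T: "is_theory fa ra T"
    and pmc: "pos_model_complete fa ra T TYPE(nat + 'f + 'r) TYPE(nat + 'f + 'r)"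
  shows "wff fa ra p \<Longrightarrow> \<forall>(M::(('f,'r) K,'f,'r) struc) (N::(('f,'r) K,'f,'r) struc) k s.
     is_model fa T M \<and> is_model fa T N \<and> hom fa ra M N k \<and> range s \<subseteq> dom M \<longrightarrow>
     (sat M s p \<longleftrightarrow> sat N (k \<circ> s) p)"
proof (induction p)
  have imm: "immersion fa ra M N k" if "is_model fa T M" "is_model fa T N" "hom fa ra M N k"
    for M N :: "(('f,'r) K,'f,'r) struc" and k
    using pmc that unfolding pos_model_complete_def by blast
  have atm: "sat M s p \<longleftrightarrow> sat N (k \<circ> s) p"
    if "is_model fa T M" "is_model fa T N" "hom fa ra M N k" "range s \<subseteq> dom M" "wff fa ra p" "atomic p"
    for M N :: "(('f,'r) K,'f,'r) struc" and k s p
  proof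
    assume "sat M s p" then show "sat N (k \<circ> s) p" using that unfolding hom_def by blast
  next
    assume A: "sat N (k \<circ> s) p"
    have "pos_qf p" using that(6) by (cases p) auto
    then have "coherent p" unfolding coherent_def by (intro exI[of _ "[]"]) auto
    then show "sat M s p" using imm[OF that(1-3)] A that unfolding immersion_def by blast
  qed
  {
    case (Eq t u) then show ?case using atm by (metis atomic.simps(1))
  next
    case (Rel r ts) then show ?case using atm by (metis atomic.simps(2))
  next
    case Bot then show ?case by simp
  next
    case Top then show ?case by simp
  next
    case (Neg p)
    have w: "wff fa ra p" using Neg.prems by auto
    show ?case
    proof (intro allI impI)
      fix M N :: "(('f,'r) K,'f,'r) struc" and k :: "('f,'r) K \<Rightarrow> ('f,'r) K" and s :: "nat \<Rightarrow> ('f,'r) K"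
      assume A: "is_model fa T M \<and> is_model fa T N \<and> hom fa ra M N k \<and> range s \<subseteq> dom M"
      have "sat M s p \<longleftrightarrow> sat N (k \<circ> s) p" using Neg.IH[OF w, rule_format, OF A] .
      then show "sat M s (Neg p) \<longleftrightarrow> sat N (k \<circ> s) (Neg p)" by simp
    qed
  next
    case (Conj p q)
    have w: "wff fa ra p" "wff fa ra q" using Conj.prems by auto
    show ?case
    proof (intro allI impI)
      fix M N :: "(('f,'r) K,'f,'r) struc" and k :: "('f,'r) K \<Rightarrow> ('f,'r) K" and s :: "nat \<Rightarrow> ('f,'r) K"
      assume A: "is_model fa T M \<and> is_model fa T N \<and> hom fa ra M N k \<and> range s \<subseteq> dom M"
      have "sat M s p \<longleftrightarrow> sat N (k \<circ> s) p" using Conj.IH(1)[OF w(1), rule_format, OF A] .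
      moreover have "sat M s q \<longleftrightarrow> sat N (k \<circ> s) q" using Conj.IH(2)[OF w(2), rule_format, OF A] .
      ultimately show "sat M s (Conj p q) \<longleftrightarrow> sat N (k \<circ> s) (Conj p q)" by simp
    qed
  next
    case (Disj p q)
    have w: "wff fa ra p" "wff fa ra q" using Disj.prems by auto
    show ?case
    proof (intro allI impI)
      fix M N :: "(('f,'r) K,'f,'r) struc" and k :: "('f,'r) K \<Rightarrow> ('f,'r) K" and s :: "nat \<Rightarrow> ('f,'r) K"
      assume A: "is_model fa T M \<and> is_model fa T N \<and> hom fa ra M N k \<and> range s \<subseteq> dom M"
      have "sat M s p \<longleftrightarrow> sat N (k \<circ> s) p" using Disj.IH(1)[OF w(1), rule_format, OF A] .
      moreover have "sat M s q \<longleftrightarrow> sat N (k \<circ> s) q" using Disj.IH(2)[OF w(2), rule_format, OF A] .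
      ultimately show "sat M s (Disj p q) \<longleftrightarrow> sat N (k \<circ> s) (Disj p q)" by simp
    qed
  next
    case (Imp p q)
    have w: "wff fa ra p" "wff fa ra q" using Imp.prems by auto
    show ?case
    proof (intro allI impI)
      fix M N :: "(('f,'r) K,'f,'r) struc" and k :: "('f,'r) K \<Rightarrow> ('f,'r) K" and s :: "nat \<Rightarrow> ('f,'r) K"
      assume A: "is_model fa T M \<and> is_model fa T N \<and> hom fa ra M N k \<and> range s \<subseteq> dom M"
      have "sat M s p \<longleftrightarrow> sat N (k \<circ> s) p" using Imp.IH(1)[OF w(1), rule_format, OF A] .
      moreover have "sat M s q \<longleftrightarrow> sat N (k \<circ> s) q" using Imp.IH(2)[OF w(2), rule_format, OF A] .
      ultimately show "sat M s (Imp p q) \<longleftrightarrow> sat N (k \<circ> s) (Imp p q)" by simp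
    qed
  next
    case (Ex x p)
    have IH: "is_model fa T M \<Longrightarrow> is_model fa T N \<Longrightarrow> hom fa ra M N k \<Longrightarrow> range s \<subseteq> dom M \<Longrightarrow>
      sat M s p \<longleftrightarrow> sat N (k \<circ> s) p" for M N :: "(('f,'r) K,'f,'r) struc" and k :: "('f,'r) K \<Rightarrow> ('f,'r) K" and s :: "nat \<Rightarrow> ('f,'r) K"
      using Ex.IH[OF Ex.prems[simplified], rule_format] by blast
    show ?case
    proof (intro allI impI)
      fix M N :: "(('f,'r) K,'f,'r) struc" and k :: "('f,'r) K \<Rightarrow> ('f,'r) K" and s :: "nat \<Rightarrow> ('f,'r) K"
      assume A: "is_model fa T M \<and> is_model fa T N \<and> hom fa ra M N k \<and> range s \<subseteq> dom M"
      have kd: "\<And>a. a \<in> dom M \<Longrightarrow> k a \<in> dom N" using A unfolding hom_def by blast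
      show "sat M s (Ex x p) \<longleftrightarrow> sat N (k \<circ> s) (Ex x p)"
      proof
        assume "sat M s (Ex x p)"
        then obtain a where a: "a \<in> dom M" "sat M (s(x:=a)) p" by auto
        have "range (s(x:=a)) \<subseteq> dom M" using A a by auto
        then have "sat N (k \<circ> s(x:=a)) p" using IH A a by blast
        moreover have "k \<circ> s(x:=a) = (k \<circ> s)(x := k a)" by auto
        ultimately show "sat N (k \<circ> s) (Ex x p)" using kd[OF a(1)] by auto
      next
        assume "sat N (k \<circ> s) (Ex x p)"
        then obtain b where b: "b \<in> dom N" "sat N ((k \<circ> s)(x:=b)) p" by auto
        have "immersion fa ra M N k" using imm A by blast
        then obtain C :: "(('f,'r) K,'f,'r) struc" and d g where
          C: "is_model fa T C" "hom fa ra N C g" "\<forall>a\<in>dom M. d a \<in> dom C" "\<forall>a\<in>dom M. g (k a) = d a"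
          "\<forall>p s. wff fa ra p \<and> range s \<subseteq> dom M \<longrightarrow> (sat M s p \<longleftrightarrow> sat C (d \<circ> s) p)"
          using amalg[OF T] A by metis
        have r: "range ((k \<circ> s)(x:=b)) \<subseteq> dom N" using A b kd by auto
        have "sat C (g \<circ> ((k \<circ> s)(x:=b))) p" using IH[OF _ C(1) C(2) r] A b by blast
        moreover have "g \<circ> ((k \<circ> s)(x:=b)) = (d \<circ> s)(x := g b)" using C(4) A by (auto simp: fun_eq_iff)
        moreover have "g b \<in> dom C" using C(2) b unfolding hom_def by blast
        ultimately have "sat C (d \<circ> s) (Ex x p)" by auto
        then show "sat M s (Ex x p)" using C(5)[rule_format, of "Ex x p" s] Ex.prems A by blast
      qed
    qed
  next
    case (All x p)
    have IH: "is_model fa T M \<Longrightarrow> is_model fa T N \<Longrightarrow> hom fa ra M N k \<Longrightarrow> range s \<subseteq> dom M \<Longrightarrow>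
      sat M s p \<longleftrightarrow> sat N (k \<circ> s) p" for M N :: "(('f,'r) K,'f,'r) struc" and k :: "('f,'r) K \<Rightarrow> ('f,'r) K" and s :: "nat \<Rightarrow> ('f,'r) K"
      using All.IH[OF All.prems[simplified], rule_format] by blast
    show ?case
    proof (intro allI impI)
      fix M N :: "(('f,'r) K,'f,'r) struc" and k :: "('f,'r) K \<Rightarrow> ('f,'r) K" and s :: "nat \<Rightarrow> ('f,'r) K"
      assume A: "is_model fa T M \<and> is_model fa T N \<and> hom fa ra M N k \<and> range s \<subseteq> dom M"
      have kd: "\<And>a. a \<in> dom M \<Longrightarrow> k a \<in> dom N" using A unfolding hom_def by blast
      show "sat M s (All x p) \<longleftrightarrow> sat N (k \<circ> s) (All x p)"
      proof
        assume S: "sat N (k \<circ> s) (All x p)"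
        show "sat M s (All x p)"
        proof (simp only: sat.simps, intro ballI)
          fix a assume a: "a \<in> dom M"
          have "sat N ((k \<circ> s)(x := k a)) p" using S kd[OF a] by simp
          moreover have "k \<circ> s(x:=a) = (k \<circ> s)(x := k a)" by auto
          moreover have "range (s(x:=a)) \<subseteq> dom M" using A a by auto
          ultimately show "sat M (s(x:=a)) p" using IH A by metis
        qed
      next
        assume S: "sat M s (All x p)"
        have "immersion fa ra M N k" using imm A by blast
        then obtain C :: "(('f,'r) K,'f,'r) struc" and d g where
          C: "is_model fa T C" "hom fa ra N C g" "\<forall>a\<in>dom M. d a \<in> dom C" "\<forall>a\<in>dom M. g (k a) = d a"
          "\<forall>p s. wff fa ra p \<and> range s \<subseteq> dom M \<longrightarrow> (sat M s p \<longleftrightarrow> sat C (d \<circ> s) p)"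
          using amalg[OF T] A by metis
        have SC: "sat C (d \<circ> s) (All x p)" using C(5)[rule_format, of "All x p" s] All.prems A S by blast
        show "sat N (k \<circ> s) (All x p)"
        proof (simp only: sat.simps, intro ballI)
          fix b assume b: "b \<in> dom N"
          have r: "range ((k \<circ> s)(x:=b)) \<subseteq> dom N" using A b kd by auto
          have "g b \<in> dom C" using C(2) b unfolding hom_def by blast
          then have "sat C ((d \<circ> s)(x := g b)) p" using SC by simp
          moreover have "g \<circ> ((k \<circ> s)(x:=b)) = (d \<circ> s)(x := g b)" using C(4) A by (auto simp: fun_eq_iff)
          ultimately have "sat C (g \<circ> ((k \<circ> s)(x:=b))) p" by simp
          then show "sat N ((k \<circ> s)(x:=b)) p" using IH[OF _ C(1) C(2) r] A by blast
        qed
      qed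
    qed
  }
qed



theorem lemma4p5:
  fixes fa :: "'f \<Rightarrow> nat" and ra :: "'r \<Rightarrow> nat"
    and T :: "('f, 'r) fm set"
    and A :: "('a, 'f, 'r) struc" and B :: "('b, 'f, 'r) struc" and h :: "'a \<Rightarrow> 'b"
  assumes "is_theory fa ra T"
    and "pos_model_complete fa ra T TYPE('a) TYPE('b)"
    and "pos_model_complete fa ra T TYPE(nat + 'f + 'r) TYPE(nat + 'f + 'r)"
    and "is_model fa T A" and "is_model fa T B"
    and "hom fa ra A B h"
  shows "elementary fa ra A B h"
proof -
  note T = assms(1) and pmc = assms(3) and Am = assms(4) and Bm = assms(5) and hh = assms(6)
  have As: "is_struc fa A" and Bs: "is_struc fa B" using Am Bm unfolding is_model_def by auto
  have hd: "\<And>a. a \<in> dom A \<Longrightarrow> h a \<in> dom B" using hh unfolding hom_def by blast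
  have "sat A s p \<longleftrightarrow> sat B (h \<circ> s) p" if p: "wff fa ra p" and s: "range s \<subseteq> dom A" for p s
  proof -
    define L :: "bool \<times> ('f,'r) K \<Rightarrow> 'a" where
      "L bx = (case snd bx of Inl n \<Rightarrow> s n | Inr _ \<Rightarrow> s 0)" for bx
    have rL: "range L \<subseteq> dom A"
    proof
      fix z assume "z \<in> range L"
      then obtain bx where z: "z = L bx" by blast
      show "z \<in> dom A" using s unfolding z L_def by (cases "snd bx") auto
    qed
    have "\<exists>(A' :: (('f,'r) K,'f,'r) struc) j. is_struc fa A' \<and> j ` dom A' \<subseteq> dom A \<and>
       inj_on j (dom A') \<and> range L \<subseteq> j ` dom A' \<and>
       (\<forall>p s. wff fa ra p \<and> range s \<subseteq> dom A' \<longrightarrow> (sat A' s p \<longleftrightarrow> sat A (j \<circ> s) p))"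
      by (rule LS[OF As rL])
    then obtain A' :: "(('f,'r) K,'f,'r) struc" and jA where A': "is_struc fa A'" "jA ` dom A' \<subseteq> dom A"
      "inj_on jA (dom A')" "range L \<subseteq> jA ` dom A'"
      and elA: "\<forall>p s. wff fa ra p \<and> range s \<subseteq> dom A' \<longrightarrow> (sat A' s p \<longleftrightarrow> sat A (jA \<circ> s) p)"
      by (elim exE conjE)
    define L' :: "bool \<times> ('f,'r) K \<Rightarrow> 'b" where
      "L' bx = (if snd bx \<in> dom A' then h (jA (snd bx)) else h (s 0))" for bx
    have rL': "range L' \<subseteq> dom B"
    proof
      fix z assume "z \<in> range L'"
      then obtain bx where z: "z = L' bx" by blast
      show "z \<in> dom B"
      proof (cases "snd bx \<in> dom A'")
        case True then have "jA (snd bx) \<in> dom A" using A'(2) by blast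
        then show ?thesis using z True hd unfolding L'_def by simp
      next
        case False
        have "s 0 \<in> dom A" using s by auto
        then show ?thesis using z False hd unfolding L'_def by simp
      qed
    qed
    have "\<exists>(B' :: (('f,'r) K,'f,'r) struc) j. is_struc fa B' \<and> j ` dom B' \<subseteq> dom B \<and>
       inj_on j (dom B') \<and> range L' \<subseteq> j ` dom B' \<and>
       (\<forall>p s. wff fa ra p \<and> range s \<subseteq> dom B' \<longrightarrow> (sat B' s p \<longleftrightarrow> sat B (j \<circ> s) p))"
      by (rule LS[OF Bs rL'])
    then obtain B' :: "(('f,'r) K,'f,'r) struc" and jB where B': "is_struc fa B'" "jB ` dom B' \<subseteq> dom B"
      "inj_on jB (dom B')" "range L' \<subseteq> jB ` dom B'"
      and elB: "\<forall>p s. wff fa ra p \<and> range s \<subseteq> dom B' \<longrightarrow> (sat B' s p \<longleftrightarrow> sat B (jB \<circ> s) p)"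
      by (elim exE conjE)
    have A'm: "is_model fa T A'" by (rule elem_model[OF T Am A'(1) A'(2) elA])
    have B'm: "is_model fa T B'" by (rule elem_model[OF T Bm B'(1) B'(2) elB])
    define h' where "h' x = inv_into (dom B') jB (h (jA x))" for x
    have h': "h' x \<in> dom B' \<and> jB (h' x) = h (jA x)" if "x \<in> dom A'" for x
    proof -
      have "L' (True, x) = h (jA x)" using that unfolding L'_def by simp
      then have "h (jA x) \<in> jB ` dom B'" using B'(4) by (metis rangeI subsetD)
      then show ?thesis unfolding h'_def by (simp add: f_inv_into_f inv_into_into)
    qed
    have hom': "hom fa ra A' B' h'"
      unfolding hom_def
    proof (intro conjI allI impI)
      show "h' ` dom A' \<subseteq> dom B'" using h' by blast
    next
      fix q :: "('f,'r) fm" and t :: "nat \<Rightarrow> ('f,'r) K"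
      assume Q: "wff fa ra q \<and> atomic q \<and> range t \<subseteq> dom A' \<and> sat A' t q"
      then have "sat A (jA \<circ> t) q" using elA by blast
      moreover have "range (jA \<circ> t) \<subseteq> dom A" using Q A'(2) by auto
      ultimately have "sat B (h \<circ> (jA \<circ> t)) q" using hh Q unfolding hom_def by blast
      moreover have "h \<circ> (jA \<circ> t) = jB \<circ> (h' \<circ> t)"
      proof (rule ext)
        fix n have "t n \<in> dom A'" using Q by auto
        then show "(h \<circ> (jA \<circ> t)) n = (jB \<circ> (h' \<circ> t)) n" using h' by simp
      qed
      moreover have "range (h' \<circ> t) \<subseteq> dom B'" using Q h' by auto
      ultimately show "sat B' (h' \<circ> t) q" using elB[rule_format, of q "h' \<circ> t"] Q by simp
    qed
    define t where "t n = inv_into (dom A') jA (s n)" for n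
    have t: "t n \<in> dom A' \<and> jA (t n) = s n" for n
    proof -
      have "L (False, Inl n) = s n" unfolding L_def by simp
      then have "s n \<in> jA ` dom A'" using A'(4) by (metis rangeI subsetD)
      then show ?thesis unfolding t_def by (simp add: f_inv_into_f inv_into_into)
    qed
    have rt: "range t \<subseteq> dom A'" using t by auto
    have jt: "jA \<circ> t = s" using t by (auto simp: fun_eq_iff)
    have m: "sat A' t p \<longleftrightarrow> sat B' (h' \<circ> t) p"
      using main_K[OF T pmc p, rule_format, of A' B' h' t] A'm B'm hom' rt by blast
    have "sat A s p \<longleftrightarrow> sat A' t p" using elA[rule_format, of p t] p rt jt by simp
    also have "\<dots> \<longleftrightarrow> sat B' (h' \<circ> t) p" by (rule m)
    also have "\<dots> \<longleftrightarrow> sat B (jB \<circ> (h' \<circ> t)) p" using elB[rule_format, of p "h' \<circ> t"] p rt h' by auto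
    also have "jB \<circ> (h' \<circ> t) = h \<circ> s" using h' t by (auto simp: fun_eq_iff)
    finally show ?thesis .
  qed
  then show ?thesis using hh unfolding elementary_def by blast
qed

end
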